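(* Let $R$ be a ring, $S\in\mathrm{Den}_l(R,\mathfrak a)$, $\pi:R\to R/\mathfrak a$, $a\mapsto a+\mathfrak a$, and $\sigma:R\to S^{-1}R$, $r\mapsto r/1$ (so $R/\mathfrak a$ is identified with the subring $\sigma(R)$ of $S^{-1}R$). (1) Let $T\in\mathrm{Den}_l(S^{-1}R,0)$ be such that $\sigma(S)\subseteq T$ and $\{\sigma(s)^{-1}\mid s\in S\}\subseteq T$. Then $T':=\sigma^{-1}(T)\in\mathrm{Den}_l(R,\mathfrak a)$, $T'$ is $S$-saturated, $T=\{\sigma(s)^{-1}\sigma(t')\mid s\in S, t'\in T'\}$, the natural ring homomorphism $S^{-1}R\to T'^{-1}R$ is injective, and $T'^{-1}R\cong T^{-1}(S^{-1}R)$ naturally. (2) $\pi^{-1}(S_0(R/\mathfrak a))=S_{\mathfrak a}(R)$, $\pi(S_{\mathfrak a}(R))=S_0(R/\mathfrak a)$, and $Q_{\mathfrak a}(R):=S_{\mathfrak a}(R)^{-1}R\cong Q_l(R/\mathfrak a)$.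
   Context: Rings are associative with $1$. A multiplicatively closed subset $S$ ($1\in S$, $0\notin S$, closed under products) is a left Ore set if $Sr\cap Rs\ne\emptyset$ for all $r\in R,s\in S$; $\mathrm{ass}(S):=\{r\mid sr=0\text{ for some }s\in S\}$; it is a left denominator set if moreover $rs=0$ ($s\in S$) implies $tr=0$ for some $t\in S$. $\mathrm{Den}_l(R,\mathfrak a)$ is the set of left denominator sets $S$ with $\mathrm{ass}(S)=\mathfrak a$; it has a largest element under inclusion, $S_{\mathfrak a}(R)$. $S_0(A)$ denotes the largest element of $\mathrm{Den}_l(A,0)$ for a ring $A$, and $Q_l(A):=S_0(A)^{-1}A$. For $S,T'\in\mathrm{Den}_l(R)$, $T'$ is $S$-saturated if $sr\in T'$ ($s\in S,r\in R$) implies $r\in T'$, and $r's'\in T'$ ($s'\in S,r'\in R$) implies $r'\in T'$. *)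

theory Defs
  imports "HOL-Algebra.Algebra"
begin

definition mult_closed :: "('a, 'm) ring_scheme \<Rightarrow> 'a set \<Rightarrow> bool" where
  "mult_closed R S \<longleftrightarrow> S \<subseteq> carrier R \<and> \<one>\<^bsub>R\<^esub> \<in> S \<and> \<zero>\<^bsub>R\<^esub> \<notin> S \<and>
     (\<forall>s\<in>S. \<forall>t\<in>S. s \<otimes>\<^bsub>R\<^esub> t \<in> S)"

definition left_ore :: "('a, 'm) ring_scheme \<Rightarrow> 'a set \<Rightarrow> bool" where
  "left_ore R S \<longleftrightarrow> mult_closed R S \<and>
     (\<forall>r\<in>carrier R. \<forall>s\<in>S. \<exists>s'\<in>S. \<exists>r'\<in>carrier R. s' \<otimes>\<^bsub>R\<^esub> r = r' \<otimes>\<^bsub>R\<^esub> s)"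

definition ass :: "('a, 'm) ring_scheme \<Rightarrow> 'a set \<Rightarrow> 'a set" where
  "ass R S = {r \<in> carrier R. \<exists>s\<in>S. s \<otimes>\<^bsub>R\<^esub> r = \<zero>\<^bsub>R\<^esub>}"

definition left_den :: "('a, 'm) ring_scheme \<Rightarrow> 'a set \<Rightarrow> bool" where
  "left_den R S \<longleftrightarrow> left_ore R S \<and>
     (\<forall>r\<in>carrier R. \<forall>s\<in>S. r \<otimes>\<^bsub>R\<^esub> s = \<zero>\<^bsub>R\<^esub> \<longrightarrow> (\<exists>t\<in>S. t \<otimes>\<^bsub>R\<^esub> r = \<zero>\<^bsub>R\<^esub>))"

definition Den_l :: "('a, 'm) ring_scheme \<Rightarrow> 'a set \<Rightarrow> 'a set set" where
  "Den_l R a = {S. left_den R S \<and> ass R S = a}"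

definition S_max :: "('a, 'm) ring_scheme \<Rightarrow> 'a set \<Rightarrow> 'a set" where
  "S_max R a = Greatest (\<lambda>S. S \<in> Den_l R a)"

definition S0 :: "('a, 'm) ring_scheme \<Rightarrow> 'a set" where
  "S0 A = S_max A {\<zero>\<^bsub>A\<^esub>}"

definition S_saturated :: "('a, 'm) ring_scheme \<Rightarrow> 'a set \<Rightarrow> 'a set \<Rightarrow> bool" where
  "S_saturated R S T' \<longleftrightarrow>
     (\<forall>s\<in>S. \<forall>r\<in>carrier R. s \<otimes>\<^bsub>R\<^esub> r \<in> T' \<longrightarrow> r \<in> T') \<and>
     (\<forall>s\<in>S. \<forall>r\<in>carrier R. r \<otimes>\<^bsub>R\<^esub> s \<in> T' \<longrightarrow> r \<in> T')"

text \<open>S^{-1}R denotes any such ring; it is unique up to a unique isomorphism over R.\<close>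
definition is_left_loc ::
  "('a, 'm) ring_scheme \<Rightarrow> 'a set \<Rightarrow> ('b, 'n) ring_scheme \<Rightarrow> ('a \<Rightarrow> 'b) \<Rightarrow> bool" where
  "is_left_loc R S Q \<sigma> \<longleftrightarrow> ring Q \<and> \<sigma> \<in> ring_hom R Q \<and>
     (\<forall>s\<in>S. \<sigma> s \<in> Units Q) \<and>
     (\<forall>q\<in>carrier Q. \<exists>s\<in>S. \<exists>r\<in>carrier R. q = inv\<^bsub>Q\<^esub> (\<sigma> s) \<otimes>\<^bsub>Q\<^esub> \<sigma> r) \<and>
     {r \<in> carrier R. \<sigma> r = \<zero>\<^bsub>Q\<^esub>} = ass R S"

end

theory Submission
  imports Defs
begin


lemma (in monoid) Units_cancel_l1 [simp]:
  "u \<in> Units G \<Longrightarrow> x \<in> carrier G \<Longrightarrow> inv u \<otimes> (u \<otimes> x) = x"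
  by (simp add: m_assoc[symmetric] Units_closed)

lemma (in monoid) Units_cancel_l2 [simp]:
  "u \<in> Units G \<Longrightarrow> x \<in> carrier G \<Longrightarrow> u \<otimes> (inv u \<otimes> x) = x"
  by (simp add: m_assoc[symmetric] Units_closed)

lemma (in ring) inv_mult_units:
  assumes "u \<in> Units R" "v \<in> Units R"
  shows "inv (u \<otimes> v) = inv v \<otimes> inv u"
proof -
  have "inv v \<otimes> inv u = inv (u \<otimes> v)"
    apply (rule inv_unique')
    using assms Units_closed[OF assms(1)] Units_closed[OF assms(2)]
      Units_inv_closed[OF assms(1)] Units_inv_closed[OF assms(2)] by (auto simp: m_assoc)
  thus ?thesis by simp
qed

lemma (in ring) G0:
  assumes a: "a \<in> Units R" and b: "b \<in> Units R" and c: "c \<in> Units R" and d: "d \<in> carrier R"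
    and e: "c \<otimes> a = d \<otimes> b"
  shows "inv (c \<otimes> a) \<otimes> c = inv a" "inv (c \<otimes> a) \<otimes> d = inv b"
proof -
  have ac: "a \<in> carrier R" "b \<in> carrier R" "c \<in> carrier R" "inv a \<in> carrier R" "inv b \<in> carrier R"
      "inv c \<in> carrier R" using a b c by auto
  show "inv (c \<otimes> a) \<otimes> c = inv a"
    using ac by (simp add: inv_mult_units a c m_assoc)
  have "d = c \<otimes> a \<otimes> inv b" using e ac d b by (simp add: m_assoc)
  thus "inv (c \<otimes> a) \<otimes> d = inv b"
    using ac by (simp add: inv_mult_units a c m_assoc)
qed

lemma (in ring) G1:
  assumes a: "a \<in> Units R" and b: "b \<in> Units R" and c: "c \<in> Units R" and d: "d \<in> carrier R"
    and x: "x \<in> carrier R" and y: "y \<in> carrier R" and e: "c \<otimes> x = d \<otimes> b"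
  shows "(inv a \<otimes> x) \<otimes> (inv b \<otimes> y) = inv (c \<otimes> a) \<otimes> (d \<otimes> y)"
proof -
  have ac: "a \<in> carrier R" "b \<in> carrier R" "c \<in> carrier R" "inv a \<in> carrier R" "inv b \<in> carrier R"
      "inv c \<in> carrier R" using a b c by auto
  have "x \<otimes> inv b = inv c \<otimes> d"
  proof -
    have "x = inv c \<otimes> (d \<otimes> b)" using e[symmetric] ac x c by simp
    thus ?thesis using ac d b by (simp add: m_assoc)
  qed
  moreover have "(inv a \<otimes> x) \<otimes> (inv b \<otimes> y) = inv a \<otimes> (x \<otimes> inv b) \<otimes> y"
    using ac x y d by (simp add: m_assoc)
  ultimately have "(inv a \<otimes> x) \<otimes> (inv b \<otimes> y) = inv a \<otimes> (inv c \<otimes> d) \<otimes> y" by simp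
  thus ?thesis using ac d y by (simp add: inv_mult_units a c m_assoc)
qed

lemma (in ring) G2:
  assumes a: "a \<in> Units R" and b: "b \<in> Units R" and c: "c \<in> Units R" and d: "d \<in> carrier R"
    and x: "x \<in> carrier R" and y: "y \<in> carrier R" and e: "c \<otimes> a = d \<otimes> b"
  shows "inv a \<otimes> x \<oplus> inv b \<otimes> y = inv (c \<otimes> a) \<otimes> (c \<otimes> x \<oplus> d \<otimes> y)"
proof -
  have ac: "a \<in> carrier R" "b \<in> carrier R" "c \<in> carrier R" "inv (c \<otimes> a) \<in> carrier R"
    using a b c by auto
  show ?thesis using G0[OF a b c d e] ac x y d
    by (simp add: r_distr m_assoc[symmetric])
qed

lemma (in ring) G3:
  assumes a: "a \<in> Units R" and b: "b \<in> Units R" and c: "c \<in> Units R" and d: "d \<in> carrier R"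
    and x: "x \<in> carrier R" and y: "y \<in> carrier R" and e: "c \<otimes> a = d \<otimes> b"
    and e2: "c \<otimes> x = d \<otimes> y"
  shows "inv a \<otimes> x = inv b \<otimes> y"
proof -
  have ac: "a \<in> carrier R" "b \<in> carrier R" "c \<in> carrier R" "inv (c \<otimes> a) \<in> carrier R"
    using a b c by auto
  have "inv a \<otimes> x = inv (c \<otimes> a) \<otimes> c \<otimes> x" using G0[OF a b c d e] by simp
  also have "\<dots> = inv (c \<otimes> a) \<otimes> (d \<otimes> y)" using ac x e2 by (simp add: m_assoc)
  also have "\<dots> = inv (c \<otimes> a) \<otimes> d \<otimes> y" using ac d y by (simp add: m_assoc)
  also have "\<dots> = inv b \<otimes> y" using G0[OF a b c d e] by simp
  finally show ?thesis .
qed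

lemma (in ring) G4:
  assumes a: "a \<in> Units R" and b: "b \<in> Units R" and c: "c \<in> Units R" and d: "d \<in> carrier R"
    and x: "x \<in> carrier R" and y: "y \<in> carrier R" and e: "c \<otimes> a = d \<otimes> b"
    and e2: "inv a \<otimes> x = inv b \<otimes> y"
  shows "c \<otimes> x = d \<otimes> y"
proof -
  have ac: "a \<in> carrier R" "b \<in> carrier R" "c \<in> carrier R" "inv a \<in> carrier R" "inv b \<in> carrier R"
    using a b c by auto
  have "c \<otimes> x = (c \<otimes> a) \<otimes> (inv a \<otimes> x)" using ac x a by (simp add: m_assoc)
  also have "\<dots> = (d \<otimes> b) \<otimes> (inv b \<otimes> y)" using e e2 by simp
  also have "\<dots> = d \<otimes> y" using ac y d b by (simp add: m_assoc)
  finally show ?thesis .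
qed

lemma (in ring) unit_move:
  assumes "u \<in> Units R" "x \<in> carrier R" "y \<in> carrier R"
  shows "(inv u \<otimes> x = y) \<longleftrightarrow> (x = u \<otimes> y)"
  using assms by (metis Units_cancel_l1 Units_cancel_l2 Units_inv_closed Units_closed m_closed)

lemma hom_units:
  assumes "ring A" "ring B" "h \<in> ring_hom A B" "u \<in> Units A"
  shows "h u \<in> Units B" "h (inv\<^bsub>A\<^esub> u) = inv\<^bsub>B\<^esub> (h u)"
proof -
  interpret A: ring A by fact
  interpret B: ring B by fact
  have c: "u \<in> carrier A" "inv\<^bsub>A\<^esub> u \<in> carrier A" using assms by auto
  have 1: "h u \<otimes>\<^bsub>B\<^esub> h (inv\<^bsub>A\<^esub> u) = \<one>\<^bsub>B\<^esub>" "h (inv\<^bsub>A\<^esub> u) \<otimes>\<^bsub>B\<^esub> h u = \<one>\<^bsub>B\<^esub>"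
    using c assms(3,4) by (simp_all add: ring_hom_mult[symmetric] ring_hom_one)
  have hc: "h u \<in> carrier B" "h (inv\<^bsub>A\<^esub> u) \<in> carrier B" using c ring_hom_closed[OF assms(3)] by auto
  show "h u \<in> Units B" using 1 hc unfolding Units_def by auto
  show "h (inv\<^bsub>A\<^esub> u) = inv\<^bsub>B\<^esub> (h u)" using B.inv_unique'[OF hc 1] .
qed




locale frac = R: ring R + Q: ring Q + P: ring P
  for R (structure) and Q and P +
  fixes S \<sigma> f
  assumes ore: "left_ore R S" and loc: "is_left_loc R S Q \<sigma>"
    and fhom: "f \<in> ring_hom R P" and funit: "\<And>s. s \<in> S \<Longrightarrow> f s \<in> Units P"
begin

lemma Ssub: "S \<subseteq> carrier R" and S1: "\<one> \<in> S" and Smult: "s \<in> S \<Longrightarrow> t \<in> S \<Longrightarrow> s \<otimes> t \<in> S"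
  using ore unfolding left_ore_def mult_closed_def by auto

lemma oreE: "r \<in> carrier R \<Longrightarrow> s \<in> S \<Longrightarrow> \<exists>s'\<in>S. \<exists>r'\<in>carrier R. s' \<otimes> r = r' \<otimes> s"
  using ore unfolding left_ore_def by auto

lemma shom: "\<sigma> \<in> ring_hom R Q" and sunit: "s \<in> S \<Longrightarrow> \<sigma> s \<in> Units Q"
  and rep: "q \<in> carrier Q \<Longrightarrow> \<exists>s\<in>S. \<exists>r\<in>carrier R. q = inv\<^bsub>Q\<^esub> (\<sigma> s) \<otimes>\<^bsub>Q\<^esub> \<sigma> r"
  and ker: "{r \<in> carrier R. \<sigma> r = \<zero>\<^bsub>Q\<^esub>} = ass R S"
  using loc unfolding is_left_loc_def by auto

lemma sc: "r \<in> carrier R \<Longrightarrow> \<sigma> r \<in> carrier Q" by (rule ring_hom_closed[OF shom])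
lemma fc: "r \<in> carrier R \<Longrightarrow> f r \<in> carrier P" by (rule ring_hom_closed[OF fhom])
lemma Sc: "s \<in> S \<Longrightarrow> s \<in> carrier R" using Ssub by blast
lemma sm: "x \<in> carrier R \<Longrightarrow> y \<in> carrier R \<Longrightarrow> \<sigma> (x \<otimes> y) = \<sigma> x \<otimes>\<^bsub>Q\<^esub> \<sigma> y"
  by (rule ring_hom_mult[OF shom])
lemma fm: "x \<in> carrier R \<Longrightarrow> y \<in> carrier R \<Longrightarrow> f (x \<otimes> y) = f x \<otimes>\<^bsub>P\<^esub> f y"
  by (rule ring_hom_mult[OF fhom])
lemma sa: "x \<in> carrier R \<Longrightarrow> y \<in> carrier R \<Longrightarrow> \<sigma> (x \<oplus> y) = \<sigma> x \<oplus>\<^bsub>Q\<^esub> \<sigma> y"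
  by (rule ring_hom_add[OF shom])
lemma fa: "x \<in> carrier R \<Longrightarrow> y \<in> carrier R \<Longrightarrow> f (x \<oplus> y) = f x \<oplus>\<^bsub>P\<^esub> f y"
  by (rule ring_hom_add[OF fhom])

lemma ker_eq:
  assumes x: "x \<in> carrier R" and y: "y \<in> carrier R" and e: "\<sigma> x = \<sigma> y"
  shows "\<exists>t\<in>S. t \<otimes> x = t \<otimes> y"
proof -
  interpret h: ring_hom_ring R Q \<sigma> using ring_hom_ringI2[OF R.ring_axioms Q.ring_axioms shom] .
  have "\<sigma> (x \<ominus> y) = \<zero>\<^bsub>Q\<^esub>" using x y e by (simp add: R.minus_eq sa h.hom_a_inv Q.r_neg sc)
  hence "x \<ominus> y \<in> ass R S" using ker x y by auto
  then obtain t where t: "t \<in> S" "t \<otimes> (x \<ominus> y) = \<zero>" unfolding ass_def by auto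
  hence "t \<otimes> x \<ominus> t \<otimes> y = \<zero>" using x y Sc[OF t(1)] by (simp add: R.minus_eq R.r_distr R.r_minus)
  thus ?thesis using t x y Sc[OF t(1)] by auto
qed

lemma f_eq:
  assumes x: "x \<in> carrier R" and y: "y \<in> carrier R" and e: "\<sigma> x = \<sigma> y"
  shows "f x = f y"
proof -
  obtain t where t: "t \<in> S" "t \<otimes> x = t \<otimes> y" using ker_eq[OF x y e] by auto
  have "f t \<otimes>\<^bsub>P\<^esub> f x = f t \<otimes>\<^bsub>P\<^esub> f y" using arg_cong[of _ _ f, OF t(2)] x y Sc[OF t(1)] by (simp add: fm)
  thus ?thesis using funit[OF t(1)] fc x y by simp
qed

lemma wd:
  assumes s1: "s1 \<in> S" and s2: "s2 \<in> S" and r1: "r1 \<in> carrier R" and r2: "r2 \<in> carrier R"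
    and e: "inv\<^bsub>Q\<^esub> (\<sigma> s1) \<otimes>\<^bsub>Q\<^esub> \<sigma> r1 = inv\<^bsub>Q\<^esub> (\<sigma> s2) \<otimes>\<^bsub>Q\<^esub> \<sigma> r2"
  shows "inv\<^bsub>P\<^esub> (f s1) \<otimes>\<^bsub>P\<^esub> f r1 = inv\<^bsub>P\<^esub> (f s2) \<otimes>\<^bsub>P\<^esub> f r2"
proof -
  obtain s' r' where s': "s' \<in> S" and r': "r' \<in> carrier R" and o: "s' \<otimes> s1 = r' \<otimes> s2"
    using oreE[OF Sc[OF s1] s2] by auto
  have c: "s1 \<in> carrier R" "s2 \<in> carrier R" "s' \<in> carrier R" using Sc s1 s2 s' by auto
  have "\<sigma> s' \<otimes>\<^bsub>Q\<^esub> \<sigma> s1 = \<sigma> r' \<otimes>\<^bsub>Q\<^esub> \<sigma> s2" using arg_cong[of _ _ "\<sigma>", OF o] c r' by (simp add: sm)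
  from Q.G4[OF sunit[OF s1] sunit[OF s2] sunit[OF s'] sc[OF r'] sc[OF r1] sc[OF r2] this e]
  have "\<sigma> (s' \<otimes> r1) = \<sigma> (r' \<otimes> r2)" by (simp add: sm c r1 r2 r')
  hence "f (s' \<otimes> r1) = f (r' \<otimes> r2)" using f_eq[OF R.m_closed[OF c(3) r1] R.m_closed[OF r' r2]] by simp
  hence e2: "f s' \<otimes>\<^bsub>P\<^esub> f r1 = f r' \<otimes>\<^bsub>P\<^esub> f r2" by (simp add: fm c r1 r2 r')
  have e1: "f s' \<otimes>\<^bsub>P\<^esub> f s1 = f r' \<otimes>\<^bsub>P\<^esub> f s2" using arg_cong[of _ _ "f", OF o] c r' by (simp add: fm)
  show ?thesis using P.G3[OF funit[OF s1] funit[OF s2] funit[OF s'] fc[OF r'] fc[OF r1] fc[OF r2] e1 e2] .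
qed

definition phi where
  "phi q = (SOME p. \<exists>s\<in>S. \<exists>r\<in>carrier R. q = inv\<^bsub>Q\<^esub> (\<sigma> s) \<otimes>\<^bsub>Q\<^esub> \<sigma> r \<and> p = inv\<^bsub>P\<^esub> (f s) \<otimes>\<^bsub>P\<^esub> f r)"

lemma phi_eq:
  assumes s: "s \<in> S" and r: "r \<in> carrier R"
  shows "phi (inv\<^bsub>Q\<^esub> (\<sigma> s) \<otimes>\<^bsub>Q\<^esub> \<sigma> r) = inv\<^bsub>P\<^esub> (f s) \<otimes>\<^bsub>P\<^esub> f r"
proof -
  let ?q = "inv\<^bsub>Q\<^esub> (\<sigma> s) \<otimes>\<^bsub>Q\<^esub> \<sigma> r"
  let ?P = "\<lambda>p. \<exists>s\<in>S. \<exists>r\<in>carrier R. ?q = inv\<^bsub>Q\<^esub> (\<sigma> s) \<otimes>\<^bsub>Q\<^esub> \<sigma> r \<and> p = inv\<^bsub>P\<^esub> (f s) \<otimes>\<^bsub>P\<^esub> f r"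
  have "?P (inv\<^bsub>P\<^esub> (f s) \<otimes>\<^bsub>P\<^esub> f r)" using s r by blast
  hence "?P (phi ?q)" unfolding phi_def by (rule someI)
  then obtain s' r' where "s' \<in> S" "r' \<in> carrier R" "?q = inv\<^bsub>Q\<^esub> (\<sigma> s') \<otimes>\<^bsub>Q\<^esub> \<sigma> r'"
    "phi ?q = inv\<^bsub>P\<^esub> (f s') \<otimes>\<^bsub>P\<^esub> f r'" by blast
  thus ?thesis using wd[OF s _ r, of s' r'] by simp
qed

lemma phi_sigma: "r \<in> carrier R \<Longrightarrow> phi (\<sigma> r) = f r"
  using phi_eq[OF S1, of r] shom fhom ring_hom_one[OF shom] ring_hom_one[OF fhom] sc fc by simp

lemma phi_hom: "phi \<in> ring_hom Q P"
proof (rule ring_hom_memI)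
  fix x assume "x \<in> carrier Q"
  then obtain s r where "s \<in> S" "r \<in> carrier R" "x = inv\<^bsub>Q\<^esub> (\<sigma> s) \<otimes>\<^bsub>Q\<^esub> \<sigma> r" using rep by blast
  thus "phi x \<in> carrier P" using phi_eq funit fc by auto
next
  fix x y assume "x \<in> carrier Q" "y \<in> carrier Q"
  then obtain s1 r1 s2 r2 where s1: "s1 \<in> S" and r1: "r1 \<in> carrier R"
    and x: "x = inv\<^bsub>Q\<^esub> (\<sigma> s1) \<otimes>\<^bsub>Q\<^esub> \<sigma> r1"
    and s2: "s2 \<in> S" and r2: "r2 \<in> carrier R" and y: "y = inv\<^bsub>Q\<^esub> (\<sigma> s2) \<otimes>\<^bsub>Q\<^esub> \<sigma> r2"
    using rep by meson
  have c: "s1 \<in> carrier R" "s2 \<in> carrier R" using Sc s1 s2 by auto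
  obtain s' r' where s': "s' \<in> S" and r': "r' \<in> carrier R" and o: "s' \<otimes> r1 = r' \<otimes> s2"
    using oreE[OF r1 s2] by auto
  have c': "s' \<in> carrier R" using Sc s' by auto
  have q: "\<sigma> s' \<otimes>\<^bsub>Q\<^esub> \<sigma> r1 = \<sigma> r' \<otimes>\<^bsub>Q\<^esub> \<sigma> s2" using arg_cong[of _ _ "\<sigma>", OF o] c c' r1 r' by (simp add: sm)
  have p: "f s' \<otimes>\<^bsub>P\<^esub> f r1 = f r' \<otimes>\<^bsub>P\<^esub> f s2" using arg_cong[of _ _ "f", OF o] c c' r1 r' by (simp add: fm)
  have "x \<otimes>\<^bsub>Q\<^esub> y = inv\<^bsub>Q\<^esub> (\<sigma> (s' \<otimes> s1)) \<otimes>\<^bsub>Q\<^esub> \<sigma> (r' \<otimes> r2)"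
    using Q.G1[OF sunit[OF s1] sunit[OF s2] sunit[OF s'] sc[OF r'] sc[OF r1] sc[OF r2] q] x y
      sm c c' r' r2 by simp
  hence "phi (x \<otimes>\<^bsub>Q\<^esub> y) = inv\<^bsub>P\<^esub> (f (s' \<otimes> s1)) \<otimes>\<^bsub>P\<^esub> f (r' \<otimes> r2)"
    using phi_eq Smult[OF s' s1] r' r2 by simp
  also have "\<dots> = (inv\<^bsub>P\<^esub> (f s1) \<otimes>\<^bsub>P\<^esub> f r1) \<otimes>\<^bsub>P\<^esub> (inv\<^bsub>P\<^esub> (f s2) \<otimes>\<^bsub>P\<^esub> f r2)"
    using P.G1[OF funit[OF s1] funit[OF s2] funit[OF s'] fc[OF r'] fc[OF r1] fc[OF r2] p]
      fm c c' r' r2 by simp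
  finally show "phi (x \<otimes>\<^bsub>Q\<^esub> y) = phi x \<otimes>\<^bsub>P\<^esub> phi y" using phi_eq x y s1 s2 r1 r2 by simp
next
  fix x y assume "x \<in> carrier Q" "y \<in> carrier Q"
  then obtain s1 r1 s2 r2 where s1: "s1 \<in> S" and r1: "r1 \<in> carrier R"
    and x: "x = inv\<^bsub>Q\<^esub> (\<sigma> s1) \<otimes>\<^bsub>Q\<^esub> \<sigma> r1"
    and s2: "s2 \<in> S" and r2: "r2 \<in> carrier R" and y: "y = inv\<^bsub>Q\<^esub> (\<sigma> s2) \<otimes>\<^bsub>Q\<^esub> \<sigma> r2"
    using rep by meson
  have c: "s1 \<in> carrier R" "s2 \<in> carrier R" using Sc s1 s2 by auto
  obtain s' r' where s': "s' \<in> S" and r': "r' \<in> carrier R" and o: "s' \<otimes> s1 = r' \<otimes> s2"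
    using oreE[OF c(1) s2] by auto
  have c': "s' \<in> carrier R" using Sc s' by auto
  have q: "\<sigma> s' \<otimes>\<^bsub>Q\<^esub> \<sigma> s1 = \<sigma> r' \<otimes>\<^bsub>Q\<^esub> \<sigma> s2" using arg_cong[of _ _ "\<sigma>", OF o] c c' r' by (simp add: sm)
  have p: "f s' \<otimes>\<^bsub>P\<^esub> f s1 = f r' \<otimes>\<^bsub>P\<^esub> f s2" using arg_cong[of _ _ "f", OF o] c c' r' by (simp add: fm)
  have "x \<oplus>\<^bsub>Q\<^esub> y = inv\<^bsub>Q\<^esub> (\<sigma> (s' \<otimes> s1)) \<otimes>\<^bsub>Q\<^esub> \<sigma> (s' \<otimes> r1 \<oplus> r' \<otimes> r2)"
    using Q.G2[OF sunit[OF s1] sunit[OF s2] sunit[OF s'] sc[OF r'] sc[OF r1] sc[OF r2] q] x y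
      sm sa c c' r' r1 r2 by simp
  hence "phi (x \<oplus>\<^bsub>Q\<^esub> y) = inv\<^bsub>P\<^esub> (f (s' \<otimes> s1)) \<otimes>\<^bsub>P\<^esub> f (s' \<otimes> r1 \<oplus> r' \<otimes> r2)"
    using phi_eq Smult[OF s' s1] r' r2 r1 c' by simp
  also have "\<dots> = (inv\<^bsub>P\<^esub> (f s1) \<otimes>\<^bsub>P\<^esub> f r1) \<oplus>\<^bsub>P\<^esub> (inv\<^bsub>P\<^esub> (f s2) \<otimes>\<^bsub>P\<^esub> f r2)"
    using P.G2[OF funit[OF s1] funit[OF s2] funit[OF s'] fc[OF r'] fc[OF r1] fc[OF r2] p]
      fm fa c c' r' r1 r2 by simp
  finally show "phi (x \<oplus>\<^bsub>Q\<^esub> y) = phi x \<oplus>\<^bsub>P\<^esub> phi y" using phi_eq x y s1 s2 r1 r2 by simp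
next
  show "phi \<one>\<^bsub>Q\<^esub> = \<one>\<^bsub>P\<^esub>" using phi_sigma[of \<one>] ring_hom_one[OF shom] ring_hom_one[OF fhom] by simp
qed

lemma phi_inj:
  assumes k: "\<And>r. r \<in> carrier R \<Longrightarrow> f r = \<zero>\<^bsub>P\<^esub> \<Longrightarrow> \<sigma> r = \<zero>\<^bsub>Q\<^esub>"
  shows "inj_on phi (carrier Q)"
proof -
  interpret h: ring_hom_ring Q P phi using ring_hom_ringI2[OF Q.ring_axioms P.ring_axioms phi_hom] .
  have "a_kernel Q P phi = {\<zero>\<^bsub>Q\<^esub>}"
  proof
    show "{\<zero>\<^bsub>Q\<^esub>} \<subseteq> a_kernel Q P phi" unfolding a_kernel_def' by simp
    show "a_kernel Q P phi \<subseteq> {\<zero>\<^bsub>Q\<^esub>}"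
    proof
      fix x assume "x \<in> a_kernel Q P phi"
      hence x: "x \<in> carrier Q" "phi x = \<zero>\<^bsub>P\<^esub>" unfolding a_kernel_def' by auto
      then obtain s r where s: "s \<in> S" and r: "r \<in> carrier R" and xe: "x = inv\<^bsub>Q\<^esub> (\<sigma> s) \<otimes>\<^bsub>Q\<^esub> \<sigma> r"
        using rep by blast
      have "inv\<^bsub>P\<^esub> (f s) \<otimes>\<^bsub>P\<^esub> f r = \<zero>\<^bsub>P\<^esub>" using x phi_eq[OF s r] xe by simp
      hence "f r = \<zero>\<^bsub>P\<^esub>" using P.unit_move[OF funit[OF s] fc[OF r]] funit[OF s] P.Units_closed[OF funit[OF s]] by simp
      hence "\<sigma> r = \<zero>\<^bsub>Q\<^esub>" using k r by simp
      thus "x \<in> {\<zero>\<^bsub>Q\<^esub>}" using xe sunit[OF s] by simp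
    qed
  qed
  thus ?thesis using h.inj_iff_trivial_ker by simp
qed

lemma phi_surj:
  assumes k: "\<And>p. p \<in> carrier P \<Longrightarrow> \<exists>s\<in>S. \<exists>r\<in>carrier R. p = inv\<^bsub>P\<^esub> (f s) \<otimes>\<^bsub>P\<^esub> f r"
  shows "phi ` carrier Q = carrier P"
proof
  show "phi ` carrier Q \<subseteq> carrier P" using ring_hom_closed[OF phi_hom] by blast
  show "carrier P \<subseteq> phi ` carrier Q"
  proof
    fix p assume "p \<in> carrier P"
    then obtain s r where s: "s \<in> S" and r: "r \<in> carrier R" and pe: "p = inv\<^bsub>P\<^esub> (f s) \<otimes>\<^bsub>P\<^esub> f r"
      using k by blast
    have "inv\<^bsub>Q\<^esub> (\<sigma> s) \<otimes>\<^bsub>Q\<^esub> \<sigma> r \<in> carrier Q" using sunit[OF s] sc[OF r] by simp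
    thus "p \<in> phi ` carrier Q" using phi_eq[OF s r] pe by force
  qed
qed

lemma summary:
  "\<exists>\<phi>. \<phi> \<in> ring_hom Q P \<and> (\<forall>r\<in>carrier R. \<phi> (\<sigma> r) = f r) \<and>
     ((\<forall>r\<in>carrier R. f r = \<zero>\<^bsub>P\<^esub> \<longrightarrow> \<sigma> r = \<zero>\<^bsub>Q\<^esub>) \<longrightarrow> inj_on \<phi> (carrier Q)) \<and>
     ((\<forall>r\<in>carrier R. f r = \<zero>\<^bsub>P\<^esub> \<longrightarrow> \<sigma> r = \<zero>\<^bsub>Q\<^esub>) \<and>
      (\<forall>p\<in>carrier P. \<exists>s\<in>S. \<exists>r\<in>carrier R. p = inv\<^bsub>P\<^esub> (f s) \<otimes>\<^bsub>P\<^esub> f r) \<longrightarrow> \<phi> \<in> ring_iso Q P)"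
proof (intro exI conjI impI)
  show "phi \<in> ring_hom Q P" by (rule phi_hom)
  show "\<forall>r\<in>carrier R. phi (\<sigma> r) = f r" using phi_sigma by blast
  show "inj_on phi (carrier Q)" if "\<forall>r\<in>carrier R. f r = \<zero>\<^bsub>P\<^esub> \<longrightarrow> \<sigma> r = \<zero>\<^bsub>Q\<^esub>"
    using phi_inj that by blast
  show "phi \<in> ring_iso Q P" if "(\<forall>r\<in>carrier R. f r = \<zero>\<^bsub>P\<^esub> \<longrightarrow> \<sigma> r = \<zero>\<^bsub>Q\<^esub>) \<and>
      (\<forall>p\<in>carrier P. \<exists>s\<in>S. \<exists>r\<in>carrier R. p = inv\<^bsub>P\<^esub> (f s) \<otimes>\<^bsub>P\<^esub> f r)"
    unfolding ring_iso_def bij_betw_def using phi_inj phi_surj phi_hom that by blast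
qed

end



lemma den_facts:
  assumes "S \<in> Den_l R a"
  shows "left_ore R S" "ass R S = a" "mult_closed R S"
    "\<And>r s. r \<in> carrier R \<Longrightarrow> s \<in> S \<Longrightarrow> r \<otimes>\<^bsub>R\<^esub> s = \<zero>\<^bsub>R\<^esub> \<Longrightarrow> \<exists>t\<in>S. t \<otimes>\<^bsub>R\<^esub> r = \<zero>\<^bsub>R\<^esub>"
    "\<And>r s. r \<in> carrier R \<Longrightarrow> s \<in> S \<Longrightarrow> \<exists>s'\<in>S. \<exists>r'\<in>carrier R. s' \<otimes>\<^bsub>R\<^esub> r = r' \<otimes>\<^bsub>R\<^esub> s"
  using assms unfolding Den_l_def left_den_def left_ore_def by auto

lemma part1:
  fixes R :: "('a,'m) ring_scheme" (structure) and Q :: "('b,'n) ring_scheme"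
  assumes Rr: "ring R" and SD: "S \<in> Den_l R a" and L: "is_left_loc R S Q \<sigma>"
    and TD: "T \<in> Den_l Q {\<zero>\<^bsub>Q\<^esub>}" and sST: "\<sigma> ` S \<subseteq> T"
    and iST: "{inv\<^bsub>Q\<^esub> (\<sigma> s) | s. s \<in> S} \<subseteq> T"
    and T'_def: "T' = {r \<in> carrier R. \<sigma> r \<in> T}"
  shows "T' \<in> Den_l R a \<and>
        S_saturated R S T' \<and>
        T = {inv\<^bsub>Q\<^esub> (\<sigma> s) \<otimes>\<^bsub>Q\<^esub> \<sigma> t' | s t'. s \<in> S \<and> t' \<in> T'} \<and>
        (\<forall>(Q1 :: ('c,'o) ring_scheme) (\<sigma>1 :: 'a \<Rightarrow> 'c). is_left_loc R T' Q1 \<sigma>1 \<longrightarrow>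
           (\<exists>\<phi>. \<phi> \<in> ring_hom Q Q1 \<and> (\<forall>r\<in>carrier R. \<phi> (\<sigma> r) = \<sigma>1 r) \<and>
                 inj_on \<phi> (carrier Q)) \<and>
           (\<forall>(Q2 :: ('d,'p) ring_scheme) (\<tau> :: 'b \<Rightarrow> 'd). is_left_loc Q T Q2 \<tau> \<longrightarrow>
              (\<exists>\<psi>. \<psi> \<in> ring_iso Q1 Q2 \<and> (\<forall>r\<in>carrier R. \<psi> (\<sigma>1 r) = \<tau> (\<sigma> r)))))"
proof -
  interpret R: ring R by fact
  have Qr: "ring Q" using L unfolding is_left_loc_def by auto
  interpret Q: ring Q by fact
  have oreS: "left_ore R S" and assS: "ass R S = a" using den_facts[OF SD] by auto
  interpret F: frac R Q Q S \<sigma> \<sigma>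
    unfolding frac_def frac_axioms_def using Rr Qr oreS L
    by (auto simp: is_left_loc_def)
  have Tmc: "mult_closed Q T" and oreT: "\<And>q t. q \<in> carrier Q \<Longrightarrow> t \<in> T \<Longrightarrow>
      \<exists>t'\<in>T. \<exists>q'\<in>carrier Q. t' \<otimes>\<^bsub>Q\<^esub> q = q' \<otimes>\<^bsub>Q\<^esub> t"
    and denT: "\<And>q t. q \<in> carrier Q \<Longrightarrow> t \<in> T \<Longrightarrow> q \<otimes>\<^bsub>Q\<^esub> t = \<zero>\<^bsub>Q\<^esub> \<Longrightarrow>
      \<exists>t'\<in>T. t' \<otimes>\<^bsub>Q\<^esub> q = \<zero>\<^bsub>Q\<^esub>"
    and assT: "ass Q T = {\<zero>\<^bsub>Q\<^esub>}"
    using den_facts[OF TD] unfolding left_ore_def by auto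
  have Tc: "\<And>t. t \<in> T \<Longrightarrow> t \<in> carrier Q" and T1: "\<one>\<^bsub>Q\<^esub> \<in> T" and T0: "\<zero>\<^bsub>Q\<^esub> \<notin> T"
    and Tm: "\<And>x y. x \<in> T \<Longrightarrow> y \<in> T \<Longrightarrow> x \<otimes>\<^bsub>Q\<^esub> y \<in> T"
    using Tmc unfolding mult_closed_def by auto
  have assT': "\<And>t q. t \<in> T \<Longrightarrow> q \<in> carrier Q \<Longrightarrow> t \<otimes>\<^bsub>Q\<^esub> q = \<zero>\<^bsub>Q\<^esub> \<Longrightarrow> q = \<zero>\<^bsub>Q\<^esub>"
    using assT unfolding ass_def by blast
  have sz: "\<sigma> \<zero> = \<zero>\<^bsub>Q\<^esub>" using ring_hom_zero[OF F.shom Rr Qr] .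
  have s1: "\<sigma> \<one> = \<one>\<^bsub>Q\<^esub>" using ring_hom_one[OF F.shom] .
  have kerS: "\<And>r. r \<in> carrier R \<Longrightarrow> \<sigma> r = \<zero>\<^bsub>Q\<^esub> \<longleftrightarrow> r \<in> a" using F.ker assS by auto
  have T'c: "T' \<subseteq> carrier R" using T'_def by auto
  have T'I: "\<And>r. r \<in> carrier R \<Longrightarrow> \<sigma> r \<in> T \<Longrightarrow> r \<in> T'" using T'_def by auto
  have T'D: "\<And>r. r \<in> T' \<Longrightarrow> r \<in> carrier R \<and> \<sigma> r \<in> T" using T'_def by auto
  have ST': "\<And>s. s \<in> S \<Longrightarrow> s \<in> T'" using sST F.Sc T'I by auto
  have iT: "\<And>s. s \<in> S \<Longrightarrow> inv\<^bsub>Q\<^esub> (\<sigma> s) \<in> T" using iST by blast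
  have T'm: "\<And>x y. x \<in> T' \<Longrightarrow> y \<in> T' \<Longrightarrow> x \<otimes> y \<in> T'"
  proof -
    fix x y assume x: "x \<in> T'" and y: "y \<in> T'"
    have xc: "x \<in> carrier R" "\<sigma> x \<in> T" using T'D[OF x] by auto
    have yc: "y \<in> carrier R" "\<sigma> y \<in> T" using T'D[OF y] by auto
    have "\<sigma> (x \<otimes> y) \<in> T" unfolding F.sm[OF xc(1) yc(1)] by (rule Tm[OF xc(2) yc(2)])
    from T'I[OF R.m_closed[OF xc(1) yc(1)] this] show "x \<otimes> y \<in> T'" .
  qed
  have Trep: "\<And>t. t \<in> T \<Longrightarrow> \<exists>s\<in>S. \<exists>t'\<in>T'. t = inv\<^bsub>Q\<^esub> (\<sigma> s) \<otimes>\<^bsub>Q\<^esub> \<sigma> t'"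
  proof -
    fix t assume t: "t \<in> T"
    then obtain s r where s: "s \<in> S" and r: "r \<in> carrier R" and te: "t = inv\<^bsub>Q\<^esub> (\<sigma> s) \<otimes>\<^bsub>Q\<^esub> \<sigma> r"
      using F.rep Tc by blast
    have "\<sigma> r = \<sigma> s \<otimes>\<^bsub>Q\<^esub> t" using Q.unit_move[OF F.sunit[OF s] F.sc[OF r] Tc[OF t]] te by simp
    hence "\<sigma> r \<in> T" using Tm sST s t by auto
    thus "\<exists>s\<in>S. \<exists>t'\<in>T'. t = inv\<^bsub>Q\<^esub> (\<sigma> s) \<otimes>\<^bsub>Q\<^esub> \<sigma> t'" using s r te T'I by blast
  qed
  have mcT': "mult_closed R T'"
    unfolding mult_closed_def
  proof (intro conjI ballI)
    show "T' \<subseteq> carrier R" by (rule T'c)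
    show "\<one> \<in> T'" using T'I[OF R.one_closed] s1 T1 by simp
    show "\<zero> \<notin> T'"
    proof
      assume "\<zero> \<in> T'" hence "\<sigma> \<zero> \<in> T" using T'D by blast
      thus False using sz T0 by simp
    qed
    fix x y assume "x \<in> T'" "y \<in> T'" thus "x \<otimes> y \<in> T'" by (rule T'm)
  qed
  have oreT': "\<And>r t'. r \<in> carrier R \<Longrightarrow> t' \<in> T' \<Longrightarrow>
      \<exists>s'\<in>T'. \<exists>r'\<in>carrier R. s' \<otimes> r = r' \<otimes> t'"
  proof -
    fix r t' assume r: "r \<in> carrier R" and t': "t' \<in> T'"
    have t'c: "t' \<in> carrier R" using T'c t' by auto
    obtain t0 q0 where t0: "t0 \<in> T" and q0: "q0 \<in> carrier Q"
      and e0: "t0 \<otimes>\<^bsub>Q\<^esub> \<sigma> r = q0 \<otimes>\<^bsub>Q\<^esub> \<sigma> t'"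
      using oreT[OF F.sc[OF r]] T'D[OF t'] by blast
    obtain s t1 where s: "s \<in> S" and t1: "t1 \<in> T'" and te: "t0 = inv\<^bsub>Q\<^esub> (\<sigma> s) \<otimes>\<^bsub>Q\<^esub> \<sigma> t1"
      using Trep[OF t0] by blast
    obtain s2 r2 where s2: "s2 \<in> S" and r2: "r2 \<in> carrier R" and qe: "q0 = inv\<^bsub>Q\<^esub> (\<sigma> s2) \<otimes>\<^bsub>Q\<^esub> \<sigma> r2"
      using F.rep[OF q0] by blast
    have t1c: "t1 \<in> carrier R" using T'c t1 by auto
    have sc: "s \<in> carrier R" "s2 \<in> carrier R" using F.Sc s s2 by auto
    obtain s' r' where s': "s' \<in> S" and r': "r' \<in> carrier R" and o: "s' \<otimes> s = r' \<otimes> s2"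
      using F.oreE[OF sc(1) s2] by auto
    have s'c: "s' \<in> carrier R" using F.Sc s' by auto
    have q: "\<sigma> s' \<otimes>\<^bsub>Q\<^esub> \<sigma> s = \<sigma> r' \<otimes>\<^bsub>Q\<^esub> \<sigma> s2"
      using arg_cong[of _ _ "\<sigma>", OF o] sc s'c r' by (simp add: F.sm)
    have "inv\<^bsub>Q\<^esub> (\<sigma> s) \<otimes>\<^bsub>Q\<^esub> \<sigma> (t1 \<otimes> r) = inv\<^bsub>Q\<^esub> (\<sigma> s2) \<otimes>\<^bsub>Q\<^esub> \<sigma> (r2 \<otimes> t')"
      using e0 te qe F.sunit[OF s] F.sunit[OF s2] F.sc t1c r r2 t'c
      by (simp add: F.sm Q.m_assoc)
    from Q.G4[OF F.sunit[OF s] F.sunit[OF s2] F.sunit[OF s'] F.sc[OF r'] _ _ q this]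
    have "\<sigma> s' \<otimes>\<^bsub>Q\<^esub> \<sigma> (t1 \<otimes> r) = \<sigma> r' \<otimes>\<^bsub>Q\<^esub> \<sigma> (r2 \<otimes> t')"
      using F.sc t1c r r2 t'c by simp
    hence "\<sigma> (s' \<otimes> (t1 \<otimes> r)) = \<sigma> (r' \<otimes> (r2 \<otimes> t'))"
      using s'c r' t1c r r2 t'c by (simp add: F.sm)
    then obtain s'' where s'': "s'' \<in> S" and e: "s'' \<otimes> (s' \<otimes> (t1 \<otimes> r)) = s'' \<otimes> (r' \<otimes> (r2 \<otimes> t'))"
      using F.ker_eq[OF R.m_closed[OF s'c R.m_closed[OF t1c r]] R.m_closed[OF r' R.m_closed[OF r2 t'c]]] by blast
    have s''c: "s'' \<in> carrier R" using F.Sc s'' by auto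
    have "(s'' \<otimes> s' \<otimes> t1) \<otimes> r = (s'' \<otimes> r' \<otimes> r2) \<otimes> t'"
      using e s''c s'c r' t1c r r2 t'c by (simp add: R.m_assoc)
    moreover have "s'' \<otimes> s' \<otimes> t1 \<in> T'" using T'm ST' s'' s' t1 by auto
    moreover have "s'' \<otimes> r' \<otimes> r2 \<in> carrier R" using s''c r' r2 by auto
    ultimately show "\<exists>s'\<in>T'. \<exists>r'\<in>carrier R. s' \<otimes> r = r' \<otimes> t'" by blast
  qed
  have leT': "left_ore R T'" unfolding left_ore_def using mcT' oreT' by blast
  have denT': "\<And>r t'. r \<in> carrier R \<Longrightarrow> t' \<in> T' \<Longrightarrow> r \<otimes> t' = \<zero> \<Longrightarrow> \<exists>t\<in>T'. t \<otimes> r = \<zero>"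
  proof -
    fix r t' assume r: "r \<in> carrier R" and t': "t' \<in> T'" and e: "r \<otimes> t' = \<zero>"
    have t'c: "t' \<in> carrier R" using T'c t' by auto
    have "\<sigma> r \<otimes>\<^bsub>Q\<^esub> \<sigma> t' = \<zero>\<^bsub>Q\<^esub>" using arg_cong[of _ _ \<sigma>, OF e] r t'c sz by (simp add: F.sm)
    then obtain t0 where t0: "t0 \<in> T" and e0: "t0 \<otimes>\<^bsub>Q\<^esub> \<sigma> r = \<zero>\<^bsub>Q\<^esub>"
      using denT[OF F.sc[OF r]] T'D[OF t'] by blast
    obtain s t1 where s: "s \<in> S" and t1: "t1 \<in> T'" and te: "t0 = inv\<^bsub>Q\<^esub> (\<sigma> s) \<otimes>\<^bsub>Q\<^esub> \<sigma> t1"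
      using Trep[OF t0] by blast
    have t1c: "t1 \<in> carrier R" using T'c t1 by auto
    have "inv\<^bsub>Q\<^esub> (\<sigma> s) \<otimes>\<^bsub>Q\<^esub> \<sigma> (t1 \<otimes> r) = \<zero>\<^bsub>Q\<^esub>"
      using e0 te F.sunit[OF s] F.sc t1c r by (simp add: F.sm Q.m_assoc)
    hence "\<sigma> (t1 \<otimes> r) = \<sigma> \<zero>"
      using Q.unit_move[OF F.sunit[OF s] F.sc[OF R.m_closed[OF t1c r]] Q.zero_closed] sz
        Q.Units_closed[OF F.sunit[OF s]] by simp
    then obtain s'' where s'': "s'' \<in> S" and e: "s'' \<otimes> (t1 \<otimes> r) = s'' \<otimes> \<zero>"
      using F.ker_eq[OF R.m_closed[OF t1c r] R.zero_closed] by blast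
    have s''c: "s'' \<in> carrier R" using F.Sc s'' by auto
    have "(s'' \<otimes> t1) \<otimes> r = \<zero>" using e s''c t1c r by (simp add: R.m_assoc)
    moreover have "s'' \<otimes> t1 \<in> T'" using T'm ST' s'' t1 by auto
    ultimately show "\<exists>t\<in>T'. t \<otimes> r = \<zero>" by blast
  qed
  have assT'a: "ass R T' = a"
  proof
    show "ass R T' \<subseteq> a"
    proof
      fix r assume "r \<in> ass R T'"
      then obtain t where r: "r \<in> carrier R" and t: "t \<in> T'" and e: "t \<otimes> r = \<zero>" unfolding ass_def by auto
      have tc: "t \<in> carrier R" using T'c t by auto
      have "\<sigma> t \<otimes>\<^bsub>Q\<^esub> \<sigma> r = \<zero>\<^bsub>Q\<^esub>" using arg_cong[of _ _ \<sigma>, OF e] r tc sz by (simp add: F.sm)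
      hence "\<sigma> r = \<zero>\<^bsub>Q\<^esub>" using assT' T'D[OF t] F.sc[OF r] by blast
      thus "r \<in> a" using kerS r by blast
    qed
    show "a \<subseteq> ass R T'"
    proof
      fix r assume "r \<in> a"
      then obtain s where "r \<in> carrier R" "s \<in> S" "s \<otimes> r = \<zero>" using assS unfolding ass_def by auto
      thus "r \<in> ass R T'" unfolding ass_def using ST' by blast
    qed
  qed
  have T'D1: "T' \<in> Den_l R a" unfolding Den_l_def left_den_def using leT' denT' assT'a by blast
  have sat: "S_saturated R S T'"
    unfolding S_saturated_def
  proof (intro conjI ballI impI)
    fix s r assume s: "s \<in> S" and r: "r \<in> carrier R" and sr: "s \<otimes> r \<in> T'"
    have "\<sigma> s \<otimes>\<^bsub>Q\<^esub> \<sigma> r \<in> T" using T'D[OF sr] F.sm F.Sc[OF s] r by simp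
    hence "inv\<^bsub>Q\<^esub> (\<sigma> s) \<otimes>\<^bsub>Q\<^esub> (\<sigma> s \<otimes>\<^bsub>Q\<^esub> \<sigma> r) \<in> T" using Tm iT s by blast
    hence "\<sigma> r \<in> T" using F.sunit[OF s] F.sc[OF r] by simp
    thus "r \<in> T'" using T'I r by blast
  next
    fix s r assume s: "s \<in> S" and r: "r \<in> carrier R" and sr: "r \<otimes> s \<in> T'"
    have "\<sigma> r \<otimes>\<^bsub>Q\<^esub> \<sigma> s \<in> T" using T'D[OF sr] F.sm F.Sc[OF s] r by simp
    hence "(\<sigma> r \<otimes>\<^bsub>Q\<^esub> \<sigma> s) \<otimes>\<^bsub>Q\<^esub> inv\<^bsub>Q\<^esub> (\<sigma> s) \<in> T" using Tm iT s by blast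
    hence "\<sigma> r \<in> T" using F.sunit[OF s] F.sc[OF r] Q.Units_closed[OF F.sunit[OF s]]
      by (simp add: Q.m_assoc)
    thus "r \<in> T'" using T'I r by blast
  qed
  have Teq: "T = {inv\<^bsub>Q\<^esub> (\<sigma> s) \<otimes>\<^bsub>Q\<^esub> \<sigma> t' | s t'. s \<in> S \<and> t' \<in> T'}"
  proof
    show "T \<subseteq> {inv\<^bsub>Q\<^esub> (\<sigma> s) \<otimes>\<^bsub>Q\<^esub> \<sigma> t' | s t'. s \<in> S \<and> t' \<in> T'}" using Trep by blast
    show "{inv\<^bsub>Q\<^esub> (\<sigma> s) \<otimes>\<^bsub>Q\<^esub> \<sigma> t' | s t'. s \<in> S \<and> t' \<in> T'} \<subseteq> T"
      using Tm iT T'D by blast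
  qed
  have last: "\<forall>(Q1 :: ('c,'o) ring_scheme) (\<sigma>1 :: 'a \<Rightarrow> 'c). is_left_loc R T' Q1 \<sigma>1 \<longrightarrow>
           (\<exists>\<phi>. \<phi> \<in> ring_hom Q Q1 \<and> (\<forall>r\<in>carrier R. \<phi> (\<sigma> r) = \<sigma>1 r) \<and>
                 inj_on \<phi> (carrier Q)) \<and>
           (\<forall>(Q2 :: ('d,'p) ring_scheme) (\<tau> :: 'b \<Rightarrow> 'd). is_left_loc Q T Q2 \<tau> \<longrightarrow>
              (\<exists>\<psi>. \<psi> \<in> ring_iso Q1 Q2 \<and> (\<forall>r\<in>carrier R. \<psi> (\<sigma>1 r) = \<tau> (\<sigma> r))))"
  proof (intro allI impI conjI)
    fix Q1 :: "('c,'o) ring_scheme" and \<sigma>1 :: "'a \<Rightarrow> 'c"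
    assume L1: "is_left_loc R T' Q1 \<sigma>1"
    have Q1r: "ring Q1" and h1: "\<sigma>1 \<in> ring_hom R Q1" and u1: "\<And>t. t \<in> T' \<Longrightarrow> \<sigma>1 t \<in> Units Q1"
      and rep1: "\<And>q. q \<in> carrier Q1 \<Longrightarrow> \<exists>s\<in>T'. \<exists>r\<in>carrier R. q = inv\<^bsub>Q1\<^esub> (\<sigma>1 s) \<otimes>\<^bsub>Q1\<^esub> \<sigma>1 r"
      and ker1: "{r \<in> carrier R. \<sigma>1 r = \<zero>\<^bsub>Q1\<^esub>} = ass R T'"
      using L1 unfolding is_left_loc_def by auto
    interpret G: frac R Q Q1 S \<sigma> \<sigma>1
      unfolding frac_def frac_axioms_def using Rr Qr Q1r oreS L h1 u1 ST' by auto
    have k1: "\<forall>r\<in>carrier R. \<sigma>1 r = \<zero>\<^bsub>Q1\<^esub> \<longrightarrow> \<sigma> r = \<zero>\<^bsub>Q\<^esub>"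
      using ker1 assT'a kerS by blast
    show "\<exists>\<phi>. \<phi> \<in> ring_hom Q Q1 \<and> (\<forall>r\<in>carrier R. \<phi> (\<sigma> r) = \<sigma>1 r) \<and> inj_on \<phi> (carrier Q)"
      using G.summary k1 by blast
    fix Q2 :: "('d,'p) ring_scheme" and \<tau> :: "'b \<Rightarrow> 'd"
    assume L2: "is_left_loc Q T Q2 \<tau>"
    have Q2r: "ring Q2" and h2: "\<tau> \<in> ring_hom Q Q2" and u2: "\<And>t. t \<in> T \<Longrightarrow> \<tau> t \<in> Units Q2"
      and rep2: "\<And>q. q \<in> carrier Q2 \<Longrightarrow> \<exists>s\<in>T. \<exists>r\<in>carrier Q. q = inv\<^bsub>Q2\<^esub> (\<tau> s) \<otimes>\<^bsub>Q2\<^esub> \<tau> r"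
      and ker2: "{r \<in> carrier Q. \<tau> r = \<zero>\<^bsub>Q2\<^esub>} = ass Q T"
      using L2 unfolding is_left_loc_def by auto
    interpret Q2: ring Q2 by fact
    have hc: "(\<tau> \<circ> \<sigma>) \<in> ring_hom R Q2" using ring_hom_trans[OF F.shom h2] .
    interpret H: frac R Q1 Q2 T' \<sigma>1 "\<tau> \<circ> \<sigma>"
      unfolding frac_def frac_axioms_def using Rr Q1r Q2r leT' L1 hc u2 T'D by auto
    have tc: "\<And>q. q \<in> carrier Q \<Longrightarrow> \<tau> q \<in> carrier Q2" using ring_hom_closed[OF h2] .
    have tm: "\<And>x y. x \<in> carrier Q \<Longrightarrow> y \<in> carrier Q \<Longrightarrow> \<tau> (x \<otimes>\<^bsub>Q\<^esub> y) = \<tau> x \<otimes>\<^bsub>Q2\<^esub> \<tau> y"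
      using ring_hom_mult[OF h2] .
    have k2: "\<forall>r\<in>carrier R. (\<tau> \<circ> \<sigma>) r = \<zero>\<^bsub>Q2\<^esub> \<longrightarrow> \<sigma>1 r = \<zero>\<^bsub>Q1\<^esub>"
    proof (intro ballI impI)
      fix r assume r: "r \<in> carrier R" and e: "(\<tau> \<circ> \<sigma>) r = \<zero>\<^bsub>Q2\<^esub>"
      have "\<sigma> r \<in> ass Q T" using ker2 e F.sc[OF r] by auto
      hence "\<sigma> r = \<zero>\<^bsub>Q\<^esub>" using assT by auto
      hence "r \<in> ass R T'" using kerS r assT'a by auto
      thus "\<sigma>1 r = \<zero>\<^bsub>Q1\<^esub>" using ker1 by auto
    qed
    have sur: "\<forall>p\<in>carrier Q2. \<exists>s\<in>T'. \<exists>r\<in>carrier R. p = inv\<^bsub>Q2\<^esub> ((\<tau> \<circ> \<sigma>) s) \<otimes>\<^bsub>Q2\<^esub> (\<tau> \<circ> \<sigma>) r"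
    proof
      fix p assume "p \<in> carrier Q2"
      then obtain t q where t: "t \<in> T" and q: "q \<in> carrier Q" and pe: "p = inv\<^bsub>Q2\<^esub> (\<tau> t) \<otimes>\<^bsub>Q2\<^esub> \<tau> q"
        using rep2 by blast
      obtain s t1 where s: "s \<in> S" and t1: "t1 \<in> T'" and te: "t = inv\<^bsub>Q\<^esub> (\<sigma> s) \<otimes>\<^bsub>Q\<^esub> \<sigma> t1"
        using Trep[OF t] by blast
      obtain s1 r where s1: "s1 \<in> S" and r: "r \<in> carrier R" and qe: "q = inv\<^bsub>Q\<^esub> (\<sigma> s1) \<otimes>\<^bsub>Q\<^esub> \<sigma> r"
        using F.rep[OF q] by blast
      have t1c: "t1 \<in> carrier R" using T'c t1 by auto
      have sc: "s \<in> carrier R" "s1 \<in> carrier R" using F.Sc s s1 by auto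
      obtain s' r' where s': "s' \<in> S" and r': "r' \<in> carrier R" and o: "s' \<otimes> s = r' \<otimes> s1"
        using F.oreE[OF sc(1) s1] by auto
      have s'c: "s' \<in> carrier R" using F.Sc s' by auto
      let ?A = "\<tau> (\<sigma> t1)" and ?B = "\<tau> (\<sigma> s)" and ?C = "\<tau> (\<sigma> s1)" and ?D = "\<tau> (\<sigma> s')"
        and ?E = "\<tau> (\<sigma> r')" and ?X = "\<tau> (\<sigma> r)"
      have uA: "?A \<in> Units Q2" using u2 T'D[OF t1] by auto
      have uB: "?B \<in> Units Q2" using u2 sST s by auto
      have uC: "?C \<in> Units Q2" using u2 sST s1 by auto
      have uD: "?D \<in> Units Q2" using u2 sST s' by auto
      have cE: "?E \<in> carrier Q2" "?X \<in> carrier Q2" using tc F.sc r r' by auto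
      have o2: "?D \<otimes>\<^bsub>Q2\<^esub> ?B = ?E \<otimes>\<^bsub>Q2\<^esub> ?C"
        using arg_cong[of _ _ "\<lambda>x. \<tau> (\<sigma> x)", OF o] sc s'c r' by (simp add: F.sm tm F.sc)
      have ti: "\<tau> (inv\<^bsub>Q\<^esub> (\<sigma> s)) = inv\<^bsub>Q2\<^esub> ?B" using hom_units(2)[OF Qr Q2r h2 F.sunit[OF s]] .
      have ti1: "\<tau> (inv\<^bsub>Q\<^esub> (\<sigma> s1)) = inv\<^bsub>Q2\<^esub> ?C" using hom_units(2)[OF Qr Q2r h2 F.sunit[OF s1]] .
      have "\<tau> t = inv\<^bsub>Q2\<^esub> ?B \<otimes>\<^bsub>Q2\<^esub> ?A" using te tm ti F.sunit[OF s] F.sc[OF t1c] by simp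
      hence "inv\<^bsub>Q2\<^esub> (\<tau> t) = inv\<^bsub>Q2\<^esub> ?A \<otimes>\<^bsub>Q2\<^esub> ?B"
        using Q2.inv_mult_units[OF Q2.Units_inv_Units[OF uB] uA] uB by simp
      moreover have "\<tau> q = inv\<^bsub>Q2\<^esub> ?C \<otimes>\<^bsub>Q2\<^esub> ?X" using qe tm ti1 F.sunit[OF s1] F.sc[OF r] by simp
      ultimately have "p = (inv\<^bsub>Q2\<^esub> ?A \<otimes>\<^bsub>Q2\<^esub> ?B) \<otimes>\<^bsub>Q2\<^esub> (inv\<^bsub>Q2\<^esub> ?C \<otimes>\<^bsub>Q2\<^esub> ?X)" using pe by simp
      also have "\<dots> = inv\<^bsub>Q2\<^esub> (?D \<otimes>\<^bsub>Q2\<^esub> ?A) \<otimes>\<^bsub>Q2\<^esub> (?E \<otimes>\<^bsub>Q2\<^esub> ?X)"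
        using Q2.G1[OF uA uC uD cE(1) Q2.Units_closed[OF uB] cE(2) o2] .
      also have "\<dots> = inv\<^bsub>Q2\<^esub> ((\<tau> \<circ> \<sigma>) (s' \<otimes> t1)) \<otimes>\<^bsub>Q2\<^esub> (\<tau> \<circ> \<sigma>) (r' \<otimes> r)"
        using s'c t1c r' r by (simp add: F.sm tm F.sc)
      finally show "\<exists>s\<in>T'. \<exists>r\<in>carrier R. p = inv\<^bsub>Q2\<^esub> ((\<tau> \<circ> \<sigma>) s) \<otimes>\<^bsub>Q2\<^esub> (\<tau> \<circ> \<sigma>) r"
        using T'm ST' s' t1 r' r by blast
    qed
    show "\<exists>\<psi>. \<psi> \<in> ring_iso Q1 Q2 \<and> (\<forall>r\<in>carrier R. \<psi> (\<sigma>1 r) = \<tau> (\<sigma> r))"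
      using H.summary k2 sur by auto
  qed
  show ?thesis using T'D1 sat Teq last by blast
qed




inductive_set gen :: "('a,'m) ring_scheme \<Rightarrow> 'a set \<Rightarrow> 'a set" for A U where
  gone: "\<one>\<^bsub>A\<^esub> \<in> gen A U"
| gstep: "u \<in> U \<Longrightarrow> w \<in> gen A U \<Longrightarrow> u \<otimes>\<^bsub>A\<^esub> w \<in> gen A U"

lemma S0_greatest:
  fixes A (structure)
  assumes Ar: "ring A" and ne: "\<one> \<noteq> \<zero>"
  shows "S0 A \<in> Den_l A {\<zero>}" "\<And>S'. S' \<in> Den_l A {\<zero>} \<Longrightarrow> S' \<subseteq> S0 A"
proof -
  interpret A: ring A by fact
  define U where "U = \<Union>(Den_l A {\<zero>})"
  define W where "W = gen A U"
  have Uc: "U \<subseteq> carrier A" unfolding U_def Den_l_def left_den_def left_ore_def mult_closed_def by auto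
  have Ul: "\<And>u r. u \<in> U \<Longrightarrow> r \<in> carrier A \<Longrightarrow> u \<otimes> r = \<zero> \<Longrightarrow> r = \<zero>"
    unfolding U_def Den_l_def ass_def by blast
  have Ur: "\<And>u r. u \<in> U \<Longrightarrow> r \<in> carrier A \<Longrightarrow> r \<otimes> u = \<zero> \<Longrightarrow> r = \<zero>"
  proof -
    fix u r assume u: "u \<in> U" and r: "r \<in> carrier A" and e: "r \<otimes> u = \<zero>"
    then obtain S' where S': "S' \<in> Den_l A {\<zero>}" "u \<in> S'" unfolding U_def by auto
    then obtain t where "t \<in> S'" "t \<otimes> r = \<zero>" using r e unfolding Den_l_def left_den_def by blast
    thus "r = \<zero>" using S' r unfolding Den_l_def ass_def by blast
  qed
  have Uo: "\<And>u r. u \<in> U \<Longrightarrow> r \<in> carrier A \<Longrightarrow> \<exists>s'\<in>U. \<exists>r'\<in>carrier A. s' \<otimes> r = r' \<otimes> u"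
  proof -
    fix u r assume u: "u \<in> U" and r: "r \<in> carrier A"
    then obtain S' where S': "S' \<in> Den_l A {\<zero>}" "u \<in> S'" unfolding U_def by auto
    then obtain s' r' where "s' \<in> S'" "r' \<in> carrier A" "s' \<otimes> r = r' \<otimes> u"
      using r unfolding Den_l_def left_den_def left_ore_def by blast
    thus "\<exists>s'\<in>U. \<exists>r'\<in>carrier A. s' \<otimes> r = r' \<otimes> u" using S' unfolding U_def by blast
  qed
  have Wc: "\<And>w. w \<in> W \<Longrightarrow> w \<in> carrier A"
  proof -
    fix w assume "w \<in> W" thus "w \<in> carrier A" unfolding W_def
      by (induct rule: gen.induct) (use Uc in auto)
  qed
  have Wm: "\<And>w v. w \<in> W \<Longrightarrow> v \<in> W \<Longrightarrow> w \<otimes> v \<in> W"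
  proof -
    fix w v assume w: "w \<in> W" and v: "v \<in> W"
    from w show "w \<otimes> v \<in> W" unfolding W_def
    proof (induct rule: gen.induct)
      case gone thus ?case using v Wc[OF v] W_def by simp
    next
      case (gstep u w)
      have "u \<otimes> w \<otimes> v = u \<otimes> (w \<otimes> v)" using Uc gstep Wc[OF v] Wc[of w] W_def by (simp add: A.m_assoc subsetD)
      thus ?case using gen.gstep[OF gstep(1,3)] by simp
    qed
  qed
  have Wl: "\<And>w r. w \<in> W \<Longrightarrow> r \<in> carrier A \<Longrightarrow> w \<otimes> r = \<zero> \<Longrightarrow> r = \<zero>"
  proof -
    fix w r assume w: "w \<in> W" thus "r \<in> carrier A \<Longrightarrow> w \<otimes> r = \<zero> \<Longrightarrow> r = \<zero>" unfolding W_def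
    proof (induct arbitrary: r rule: gen.induct)
      case gone thus ?case by simp
    next
      case (gstep u w)
      have wc: "w \<in> carrier A" using Wc gstep(2) W_def by blast
      have uc: "u \<in> carrier A" using Uc gstep(1) by blast
      have "u \<otimes> (w \<otimes> r) = \<zero>" using gstep(4,5) wc uc by (simp add: A.m_assoc)
      hence "w \<otimes> r = \<zero>" using Ul gstep(1) wc gstep(4) by blast
      thus ?case using gstep(3,4) by blast
    qed
  qed
  have Wr: "\<And>w r. w \<in> W \<Longrightarrow> r \<in> carrier A \<Longrightarrow> r \<otimes> w = \<zero> \<Longrightarrow> r = \<zero>"
  proof -
    fix w r assume w: "w \<in> W" thus "r \<in> carrier A \<Longrightarrow> r \<otimes> w = \<zero> \<Longrightarrow> r = \<zero>" unfolding W_def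
    proof (induct arbitrary: r rule: gen.induct)
      case gone thus ?case by simp
    next
      case (gstep u w)
      have wc: "w \<in> carrier A" using Wc gstep(2) W_def by blast
      have uc: "u \<in> carrier A" using Uc gstep(1) by blast
      have "(r \<otimes> u) \<otimes> w = \<zero>" using gstep(4,5) wc uc by (simp add: A.m_assoc)
      hence "r \<otimes> u = \<zero>" using gstep(3) gstep(4) uc by blast
      thus ?case using Ur gstep(1,4) by blast
    qed
  qed
  have Wo: "\<And>w r. w \<in> W \<Longrightarrow> r \<in> carrier A \<Longrightarrow> \<exists>s'\<in>W. \<exists>r'\<in>carrier A. s' \<otimes> r = r' \<otimes> w"
  proof -
    fix w r assume w: "w \<in> W" thus "r \<in> carrier A \<Longrightarrow> \<exists>s'\<in>W. \<exists>r'\<in>carrier A. s' \<otimes> r = r' \<otimes> w"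
      unfolding W_def
    proof (induct arbitrary: r rule: gen.induct)
      case gone
      have "\<one> \<otimes> r = r \<otimes> \<one>" using gone by simp
      thus ?case using gen.gone[of A U] gone by blast
    next
      case (gstep u w)
      have wc: "w \<in> carrier A" using Wc gstep(2) W_def by blast
      have uc: "u \<in> carrier A" using Uc gstep(1) by blast
      obtain w' r1 where w': "w' \<in> gen A U" and r1: "r1 \<in> carrier A" and e1: "w' \<otimes> r = r1 \<otimes> w"
        using gstep(3)[OF gstep(4)] by blast
      obtain s' r2 where s': "s' \<in> U" and r2: "r2 \<in> carrier A" and e2: "s' \<otimes> r1 = r2 \<otimes> u"
        using Uo[OF gstep(1) r1] by blast
      have s'c: "s' \<in> carrier A" using Uc s' by blast
      have w'c: "w' \<in> carrier A" using Wc w' W_def by blast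
      have "(s' \<otimes> w') \<otimes> r = s' \<otimes> (r1 \<otimes> w)" using e1 s'c w'c gstep(4) by (simp add: A.m_assoc)
      also have "\<dots> = (s' \<otimes> r1) \<otimes> w" using s'c r1 wc by (simp add: A.m_assoc)
      also have "\<dots> = r2 \<otimes> (u \<otimes> w)" using e2 r2 uc wc by (simp add: A.m_assoc)
      finally show ?case using gen.gstep[OF s' w'] r2 by blast
    qed
  qed
  have W0: "\<zero> \<notin> W"
  proof
    assume "\<zero> \<in> W"
    hence "\<one> = \<zero>" using Wl[of \<zero> \<one>] by simp
    thus False using ne by simp
  qed
  have WD: "W \<in> Den_l A {\<zero>}"
    unfolding Den_l_def left_den_def left_ore_def mult_closed_def
  proof (intro CollectI conjI ballI impI)
    show "W \<subseteq> carrier A" using Wc by blast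
    show "\<one> \<in> W" unfolding W_def by (rule gen.gone)
    show "\<zero> \<notin> W" by (rule W0)
    fix s t assume "s \<in> W" "t \<in> W" thus "s \<otimes> t \<in> W" by (rule Wm)
  next
    fix r s assume "r \<in> carrier A" "s \<in> W" thus "\<exists>s'\<in>W. \<exists>r'\<in>carrier A. s' \<otimes> r = r' \<otimes> s"
      using Wo by blast
  next
    fix r s assume "r \<in> carrier A" "s \<in> W" "r \<otimes> s = \<zero>"
    hence "r = \<zero>" using Wr by blast
    moreover have "\<one> \<otimes> \<zero> = \<zero>" by simp
    ultimately show "\<exists>t\<in>W. t \<otimes> r = \<zero>" using gen.gone[of A U] W_def by blast
  next
    show "ass A W = {\<zero>}"
    proof
      show "ass A W \<subseteq> {\<zero>}" unfolding ass_def using Wl by blast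
      have "\<one> \<otimes> \<zero> = \<zero>" by simp
      thus "{\<zero>} \<subseteq> ass A W" unfolding ass_def using gen.gone[of A U] W_def by blast
    qed
  qed
  have UW: "U \<subseteq> W"
  proof
    fix u assume u: "u \<in> U"
    have "u \<otimes> \<one> \<in> W" unfolding W_def by (rule gen.gstep[OF u gen.gone])
    thus "u \<in> W" using Uc u by auto
  qed
  have G: "S0 A = W" unfolding S0_def S_max_def
  proof (rule Greatest_equality)
    show "W \<in> Den_l A {\<zero>}" by (rule WD)
    fix y assume "y \<in> Den_l A {\<zero>}" thus "y \<le> W" using UW U_def by blast
  qed
  show "S0 A \<in> Den_l A {\<zero>}" using G WD by simp
  fix S' assume "S' \<in> Den_l A {\<zero>}" thus "S' \<subseteq> S0 A" using G UW U_def by blast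
qed


lemma part2:
  fixes R :: "('a,'m) ring_scheme" (structure) and Q :: "('b,'n) ring_scheme"
  assumes Rr: "ring R" and SD: "S \<in> Den_l R a" and L: "is_left_loc R S Q \<sigma>"
  shows "{r \<in> carrier R. a +> r \<in> S0 (R Quot a)} = S_max R a \<and>
    (\<lambda>r. a +> r) ` S_max R a = S0 (R Quot a) \<and>
    (\<forall>(Qa :: ('e,'x) ring_scheme) (\<sigma>a :: 'a \<Rightarrow> 'e) (Ql :: ('f,'y) ring_scheme) (\<sigma>l :: 'a set \<Rightarrow> 'f).
        is_left_loc R (S_max R a) Qa \<sigma>a \<and> is_left_loc (R Quot a) (S0 (R Quot a)) Ql \<sigma>l
        \<longrightarrow> Qa \<simeq> Ql)"
proof -
  interpret R: ring R by fact
  have Qr: "ring Q" using L unfolding is_left_loc_def by auto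
  interpret Q: ring Q by fact
  have oreS: "left_ore R S" and assS: "ass R S = a" using den_facts[OF SD] by auto
  interpret F: frac R Q Q S \<sigma> \<sigma>
    unfolding frac_def frac_axioms_def using Rr Qr oreS L
    by (auto simp: is_left_loc_def)
  have kerS: "\<And>r. r \<in> carrier R \<Longrightarrow> \<sigma> r = \<zero>\<^bsub>Q\<^esub> \<longleftrightarrow> r \<in> a" using F.ker assS by auto
  have aker: "a = a_kernel R Q \<sigma>" unfolding a_kernel_def' using F.ker assS by simp
  have Iid: "ideal a R"
    unfolding aker using ring_hom_ring.kernel_is_ideal[OF ring_hom_ringI2[OF Rr Qr F.shom]] .
  interpret I: ideal a R by fact
  define A where "A = R Quot a"
  define \<pi> where "\<pi> = (\<lambda>r. a +> r)"
  have Ar: "ring A" unfolding A_def by (rule I.quotient_is_ring)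
  interpret A: ring A by fact
  have ph: "\<pi> \<in> ring_hom R A" unfolding A_def \<pi>_def using I.rcos_ring_hom by simp
  have pc: "\<And>r. r \<in> carrier R \<Longrightarrow> \<pi> r \<in> carrier A" using ring_hom_closed[OF ph] .
  have pm: "\<And>x y. x \<in> carrier R \<Longrightarrow> y \<in> carrier R \<Longrightarrow> \<pi> (x \<otimes> y) = \<pi> x \<otimes>\<^bsub>A\<^esub> \<pi> y"
    using ring_hom_mult[OF ph] .
  have p1: "\<pi> \<one> = \<one>\<^bsub>A\<^esub>" using ring_hom_one[OF ph] .
  have Az: "\<zero>\<^bsub>A\<^esub> = a" unfolding A_def FactRing_def by simp
  have carA: "\<And>x. x \<in> carrier A \<Longrightarrow> \<exists>r\<in>carrier R. x = \<pi> r"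
    unfolding A_def \<pi>_def FactRing_def A_RCOSETS_def' by auto
  have pz: "\<And>r. r \<in> carrier R \<Longrightarrow> \<pi> r = \<zero>\<^bsub>A\<^esub> \<longleftrightarrow> r \<in> a"
  proof -
    fix r assume r: "r \<in> carrier R"
    show "\<pi> r = \<zero>\<^bsub>A\<^esub> \<longleftrightarrow> r \<in> a"
    proof
      assume "\<pi> r = \<zero>\<^bsub>A\<^esub>"
      hence "a +> r = a" unfolding \<pi>_def Az .
      thus "r \<in> a" using I.a_rcos_self[OF r] by simp
    next
      assume "r \<in> a" thus "\<pi> r = \<zero>\<^bsub>A\<^esub>" unfolding \<pi>_def Az by (rule I.a_rcos_const)
    qed
  qed
  have p0: "\<pi> \<zero> = \<zero>\<^bsub>A\<^esub>" using pz[of \<zero>] I.zero_closed by simp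
  have aass: "\<And>r. r \<in> carrier R \<Longrightarrow> r \<in> a \<longleftrightarrow> (\<exists>s\<in>S. s \<otimes> r = \<zero>)"
    using assS unfolding ass_def by blast
  have peq: "\<And>u v. u \<in> carrier R \<Longrightarrow> v \<in> carrier R \<Longrightarrow> \<pi> u = \<pi> v \<Longrightarrow> \<exists>s\<in>S. s \<otimes> u = s \<otimes> v"
  proof -
    fix u v assume u: "u \<in> carrier R" and v: "v \<in> carrier R" and e: "\<pi> u = \<pi> v"
    interpret h: ring_hom_ring R A \<pi> using ring_hom_ringI2[OF Rr Ar ph] .
    have "\<pi> (u \<ominus> v) = \<zero>\<^bsub>A\<^esub>" using u v e
      by (simp add: R.minus_eq ring_hom_add[OF ph] h.hom_a_inv A.r_neg pc)
    hence "u \<ominus> v \<in> a" using pz u v by simp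
    hence "\<sigma> (u \<ominus> v) = \<zero>\<^bsub>Q\<^esub>" using kerS[OF R.minus_closed[OF u v]] by blast
    interpret hs: ring_hom_ring R Q \<sigma> using ring_hom_ringI2[OF Rr Qr F.shom] .
    have "\<sigma> u \<ominus>\<^bsub>Q\<^esub> \<sigma> v = \<zero>\<^bsub>Q\<^esub>" using \<open>\<sigma> (u \<ominus> v) = \<zero>\<^bsub>Q\<^esub>\<close> u v
      by (simp add: R.minus_eq Q.minus_eq F.sa hs.hom_a_inv F.sc)
    hence "\<sigma> u = \<sigma> v" using F.sc u v by simp
    thus "\<exists>s\<in>S. s \<otimes> u = s \<otimes> v" using F.ker_eq[OF u v] by blast
  qed
  have img: "\<And>S''. S'' \<in> Den_l R a \<Longrightarrow> \<pi> ` S'' \<in> Den_l A {\<zero>\<^bsub>A\<^esub>}"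
  proof -
    fix S'' assume SD'': "S'' \<in> Den_l R a"
    have mc: "mult_closed R S''" and ass'': "ass R S'' = a"
      and den'': "\<And>r s. r \<in> carrier R \<Longrightarrow> s \<in> S'' \<Longrightarrow> r \<otimes> s = \<zero> \<Longrightarrow> \<exists>t\<in>S''. t \<otimes> r = \<zero>"
      and ore'': "\<And>r s. r \<in> carrier R \<Longrightarrow> s \<in> S'' \<Longrightarrow> \<exists>s'\<in>S''. \<exists>r'\<in>carrier R. s' \<otimes> r = r' \<otimes> s"
      using den_facts[OF SD''] by auto
    have S''c: "\<And>s. s \<in> S'' \<Longrightarrow> s \<in> carrier R" and S''1: "\<one> \<in> S''" and S''0: "\<zero> \<notin> S''"
      and S''m: "\<And>s t. s \<in> S'' \<Longrightarrow> t \<in> S'' \<Longrightarrow> s \<otimes> t \<in> S''"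
      using mc unfolding mult_closed_def by auto
    have a'': "\<And>r. r \<in> carrier R \<Longrightarrow> r \<in> a \<longleftrightarrow> (\<exists>s\<in>S''. s \<otimes> r = \<zero>)"
      using ass'' unfolding ass_def by blast
    have key: "\<And>s r. s \<in> S'' \<Longrightarrow> r \<in> carrier R \<Longrightarrow> s \<otimes> r \<in> a \<Longrightarrow> r \<in> a"
    proof -
      fix s r assume s: "s \<in> S''" and r: "r \<in> carrier R" and sr: "s \<otimes> r \<in> a"
      then obtain t where t: "t \<in> S''" "t \<otimes> (s \<otimes> r) = \<zero>" using a'' S''c by blast
      hence "(t \<otimes> s) \<otimes> r = \<zero>" using S''c s r by (simp add: R.m_assoc)
      thus "r \<in> a" using a'' r S''m[OF t(1) s] by blast
    qed
    show "\<pi> ` S'' \<in> Den_l A {\<zero>\<^bsub>A\<^esub>}"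
      unfolding Den_l_def left_den_def left_ore_def mult_closed_def
    proof (intro CollectI conjI ballI impI)
      show "\<pi> ` S'' \<subseteq> carrier A" using pc S''c by blast
      show "\<one>\<^bsub>A\<^esub> \<in> \<pi> ` S''" using p1 S''1 by force
      show "\<zero>\<^bsub>A\<^esub> \<notin> \<pi> ` S''"
      proof
        assume "\<zero>\<^bsub>A\<^esub> \<in> \<pi> ` S''"
        then obtain s where s: "s \<in> S''" "\<pi> s = \<zero>\<^bsub>A\<^esub>" by auto
        hence "s \<in> a" using pz S''c by blast
        then obtain t where "t \<in> S''" "t \<otimes> s = \<zero>" using a'' S''c s by blast
        thus False using S''m[OF _ s(1)] S''0 by metis
      qed
      fix x y assume "x \<in> \<pi> ` S''" "y \<in> \<pi> ` S''"
      then obtain s t where "s \<in> S''" "t \<in> S''" "x = \<pi> s" "y = \<pi> t" by auto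
      thus "x \<otimes>\<^bsub>A\<^esub> y \<in> \<pi> ` S''" using pm S''c S''m by (metis image_eqI)
    next
      fix x y assume x: "x \<in> carrier A" and y: "y \<in> \<pi> ` S''"
      obtain r where r: "r \<in> carrier R" "x = \<pi> r" using carA x by blast
      obtain s where s: "s \<in> S''" "y = \<pi> s" using y by auto
      obtain s' r' where "s' \<in> S''" "r' \<in> carrier R" "s' \<otimes> r = r' \<otimes> s" using ore''[OF r(1) s(1)] by blast
      hence "\<pi> s' \<otimes>\<^bsub>A\<^esub> x = \<pi> r' \<otimes>\<^bsub>A\<^esub> y \<and> \<pi> s' \<in> \<pi> ` S'' \<and> \<pi> r' \<in> carrier A"
        using r s pm S''c pc by (metis image_eqI)
      thus "\<exists>s'\<in>\<pi> ` S''. \<exists>r'\<in>carrier A. s' \<otimes>\<^bsub>A\<^esub> x = r' \<otimes>\<^bsub>A\<^esub> y" by blast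
    next
      fix x y assume x: "x \<in> carrier A" and y: "y \<in> \<pi> ` S''" and e: "x \<otimes>\<^bsub>A\<^esub> y = \<zero>\<^bsub>A\<^esub>"
      obtain r where r: "r \<in> carrier R" "x = \<pi> r" using carA x by blast
      obtain s where s: "s \<in> S''" "y = \<pi> s" using y by auto
      have "\<pi> (r \<otimes> s) = \<zero>\<^bsub>A\<^esub>" using e r s pm S''c by simp
      hence "r \<otimes> s \<in> a" using pz r S''c s by blast
      then obtain t where t: "t \<in> S''" "t \<otimes> (r \<otimes> s) = \<zero>" using a'' r S''c s by blast
      hence "(t \<otimes> r) \<otimes> s = \<zero>" using S''c s r by (simp add: R.m_assoc)
      then obtain t' where t': "t' \<in> S''" "t' \<otimes> (t \<otimes> r) = \<zero>" using den'' S''c t r s by blast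
      hence "(t' \<otimes> t) \<otimes> r = \<zero>" using S''c t r by (simp add: R.m_assoc)
      hence "r \<in> a" using a'' r S''m[OF t'(1) t(1)] by blast
      hence "x = \<zero>\<^bsub>A\<^esub>" using pz r by blast
      moreover have "\<one>\<^bsub>A\<^esub> \<otimes>\<^bsub>A\<^esub> \<zero>\<^bsub>A\<^esub> = \<zero>\<^bsub>A\<^esub>" by simp
      moreover have "\<one>\<^bsub>A\<^esub> \<in> \<pi> ` S''" using p1 S''1 by (metis image_eqI)
      ultimately show "\<exists>t\<in>\<pi> ` S''. t \<otimes>\<^bsub>A\<^esub> x = \<zero>\<^bsub>A\<^esub>" by blast
    next
      show "ass A (\<pi> ` S'') = {\<zero>\<^bsub>A\<^esub>}"
      proof
        show "ass A (\<pi> ` S'') \<subseteq> {\<zero>\<^bsub>A\<^esub>}"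
        proof
          fix x assume "x \<in> ass A (\<pi> ` S'')"
          then obtain y where x: "x \<in> carrier A" and y: "y \<in> \<pi> ` S''" and e: "y \<otimes>\<^bsub>A\<^esub> x = \<zero>\<^bsub>A\<^esub>"
            unfolding ass_def by auto
          obtain r where r: "r \<in> carrier R" "x = \<pi> r" using carA x by blast
          obtain s where s: "s \<in> S''" "y = \<pi> s" using y by auto
          have "\<pi> (s \<otimes> r) = \<zero>\<^bsub>A\<^esub>" using e r s pm S''c by simp
          hence "s \<otimes> r \<in> a" using pz r S''c s by blast
          hence "r \<in> a" using key s r by blast
          thus "x \<in> {\<zero>\<^bsub>A\<^esub>}" using pz r by blast
        qed
        have "\<one>\<^bsub>A\<^esub> \<otimes>\<^bsub>A\<^esub> \<zero>\<^bsub>A\<^esub> = \<zero>\<^bsub>A\<^esub>" by simp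
        moreover have "\<one>\<^bsub>A\<^esub> \<in> \<pi> ` S''" using p1 S''1 by (metis image_eqI)
        ultimately show "{\<zero>\<^bsub>A\<^esub>} \<subseteq> ass A (\<pi> ` S'')" unfolding ass_def by blast
      qed
    qed
  qed
  have ne: "\<one>\<^bsub>A\<^esub> \<noteq> \<zero>\<^bsub>A\<^esub>"
  proof
    assume "\<one>\<^bsub>A\<^esub> = \<zero>\<^bsub>A\<^esub>"
    hence "\<one> \<in> a" using pz p1 by simp
    then obtain s where "s \<in> S" "s \<otimes> \<one> = \<zero>" using aass by blast
    thus False using F.Sc oreS unfolding left_ore_def mult_closed_def by auto
  qed
  have S0D: "S0 A \<in> Den_l A {\<zero>\<^bsub>A\<^esub>}" and S0G: "\<And>S'. S' \<in> Den_l A {\<zero>\<^bsub>A\<^esub>} \<Longrightarrow> S' \<subseteq> S0 A"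
    using S0_greatest[OF Ar ne] by auto
  have S0mc: "mult_closed A (S0 A)" and S0ass: "ass A (S0 A) = {\<zero>\<^bsub>A\<^esub>}"
    and S0den: "\<And>r s. r \<in> carrier A \<Longrightarrow> s \<in> S0 A \<Longrightarrow> r \<otimes>\<^bsub>A\<^esub> s = \<zero>\<^bsub>A\<^esub> \<Longrightarrow> \<exists>t\<in>S0 A. t \<otimes>\<^bsub>A\<^esub> r = \<zero>\<^bsub>A\<^esub>"
    and S0ore: "\<And>r s. r \<in> carrier A \<Longrightarrow> s \<in> S0 A \<Longrightarrow> \<exists>s'\<in>S0 A. \<exists>r'\<in>carrier A. s' \<otimes>\<^bsub>A\<^esub> r = r' \<otimes>\<^bsub>A\<^esub> s"
    using den_facts[OF S0D] by auto
  have S0c: "\<And>x. x \<in> S0 A \<Longrightarrow> x \<in> carrier A" and S01: "\<one>\<^bsub>A\<^esub> \<in> S0 A" and S00: "\<zero>\<^bsub>A\<^esub> \<notin> S0 A"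
    and S0m: "\<And>x y. x \<in> S0 A \<Longrightarrow> y \<in> S0 A \<Longrightarrow> x \<otimes>\<^bsub>A\<^esub> y \<in> S0 A"
    using S0mc unfolding mult_closed_def by auto
  have S0a: "\<And>x y. y \<in> S0 A \<Longrightarrow> x \<in> carrier A \<Longrightarrow> y \<otimes>\<^bsub>A\<^esub> x = \<zero>\<^bsub>A\<^esub> \<Longrightarrow> x = \<zero>\<^bsub>A\<^esub>"
    using S0ass unfolding ass_def by blast
  define V where "V = {r \<in> carrier R. \<pi> r \<in> S0 A}"
  have VI: "\<And>r. r \<in> carrier R \<Longrightarrow> \<pi> r \<in> S0 A \<Longrightarrow> r \<in> V" unfolding V_def by blast
  have VD: "\<And>r. r \<in> V \<Longrightarrow> r \<in> carrier R \<and> \<pi> r \<in> S0 A" unfolding V_def by blast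
  have piS: "\<pi> ` S \<subseteq> S0 A" using S0G img SD by blast
  have SV: "\<And>s. s \<in> S \<Longrightarrow> s \<in> V" using piS F.Sc VI by blast
  have Vm: "\<And>x y. x \<in> V \<Longrightarrow> y \<in> V \<Longrightarrow> x \<otimes> y \<in> V"
  proof -
    fix x y assume x: "x \<in> V" and y: "y \<in> V"
    have xc: "x \<in> carrier R" "\<pi> x \<in> S0 A" using VD[OF x] by auto
    have yc: "y \<in> carrier R" "\<pi> y \<in> S0 A" using VD[OF y] by auto
    have "\<pi> (x \<otimes> y) \<in> S0 A" unfolding pm[OF xc(1) yc(1)] by (rule S0m[OF xc(2) yc(2)])
    from VI[OF R.m_closed[OF xc(1) yc(1)] this] show "x \<otimes> y \<in> V" .
  qed
  have VD1: "V \<in> Den_l R a"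
    unfolding Den_l_def left_den_def left_ore_def mult_closed_def
  proof (intro CollectI conjI ballI impI)
    show "V \<subseteq> carrier R" unfolding V_def by blast
    show "\<one> \<in> V" using VI[OF R.one_closed] p1 S01 by simp
    show "\<zero> \<notin> V"
    proof
      assume "\<zero> \<in> V" hence "\<pi> \<zero> \<in> S0 A" using VD by blast
      thus False using p0 S00 by simp
    qed
    fix x y assume "x \<in> V" "y \<in> V" thus "x \<otimes> y \<in> V" by (rule Vm)
  next
    fix r t assume r: "r \<in> carrier R" and t: "t \<in> V"
    have tc: "t \<in> carrier R" "\<pi> t \<in> S0 A" using VD[OF t] by auto
    obtain y x where y: "y \<in> S0 A" and x: "x \<in> carrier A" and e: "y \<otimes>\<^bsub>A\<^esub> \<pi> r = x \<otimes>\<^bsub>A\<^esub> \<pi> t"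
      using S0ore[OF pc[OF r] tc(2)] by blast
    obtain t' where t': "t' \<in> carrier R" "y = \<pi> t'" using carA S0c[OF y] by blast
    obtain r' where r': "r' \<in> carrier R" "x = \<pi> r'" using carA x by blast
    have t'V: "t' \<in> V" using VI t' y by blast
    have "\<pi> (t' \<otimes> r) = \<pi> (r' \<otimes> t)" using e t' r' r tc pm by simp
    then obtain s where s: "s \<in> S" "s \<otimes> (t' \<otimes> r) = s \<otimes> (r' \<otimes> t)"
      using peq[OF R.m_closed[OF t'(1) r] R.m_closed[OF r'(1) tc(1)]] by blast
    have sc: "s \<in> carrier R" using F.Sc s(1) .
    have "(s \<otimes> t') \<otimes> r = (s \<otimes> r') \<otimes> t" using s(2) sc t' r r' tc by (simp add: R.m_assoc)
    moreover have "s \<otimes> t' \<in> V" using Vm SV[OF s(1)] t'V by blast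
    moreover have "s \<otimes> r' \<in> carrier R" using sc r' by blast
    ultimately show "\<exists>s'\<in>V. \<exists>r'\<in>carrier R. s' \<otimes> r = r' \<otimes> t" by blast
  next
    fix r t assume r: "r \<in> carrier R" and t: "t \<in> V" and e: "r \<otimes> t = \<zero>"
    have tc: "t \<in> carrier R" "\<pi> t \<in> S0 A" using VD[OF t] by auto
    have "\<pi> r \<otimes>\<^bsub>A\<^esub> \<pi> t = \<zero>\<^bsub>A\<^esub>" using arg_cong[of _ _ \<pi>, OF e] r tc p0 pm by simp
    then obtain y where y: "y \<in> S0 A" and ey: "y \<otimes>\<^bsub>A\<^esub> \<pi> r = \<zero>\<^bsub>A\<^esub>"
      using S0den[OF pc[OF r] tc(2)] by blast
    obtain u where u: "u \<in> carrier R" "y = \<pi> u" using carA S0c[OF y] by blast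
    have uV: "u \<in> V" using VI u y by blast
    have "\<pi> (u \<otimes> r) = \<pi> \<zero>" using ey u r pm p0 by simp
    then obtain s where s: "s \<in> S" "s \<otimes> (u \<otimes> r) = s \<otimes> \<zero>"
      using peq[OF R.m_closed[OF u(1) r] R.zero_closed] by blast
    have sc: "s \<in> carrier R" using F.Sc s(1) .
    have "(s \<otimes> u) \<otimes> r = \<zero>" using s(2) sc u r by (simp add: R.m_assoc)
    moreover have "s \<otimes> u \<in> V" using Vm SV[OF s(1)] uV by blast
    ultimately show "\<exists>t\<in>V. t \<otimes> r = \<zero>" by blast
  next
    show "ass R V = a"
    proof
      show "ass R V \<subseteq> a"
      proof
        fix r assume "r \<in> ass R V"
        then obtain t where r: "r \<in> carrier R" and t: "t \<in> V" and e: "t \<otimes> r = \<zero>" unfolding ass_def by auto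
        have tc: "t \<in> carrier R" "\<pi> t \<in> S0 A" using VD[OF t] by auto
        have "\<pi> t \<otimes>\<^bsub>A\<^esub> \<pi> r = \<zero>\<^bsub>A\<^esub>" using arg_cong[of _ _ \<pi>, OF e] r tc p0 pm by simp
        hence "\<pi> r = \<zero>\<^bsub>A\<^esub>" using S0a tc(2) pc[OF r] by blast
        thus "r \<in> a" using pz r by blast
      qed
      show "a \<subseteq> ass R V"
      proof
        fix r assume "r \<in> a"
        then obtain s where "r \<in> carrier R" "s \<in> S" "s \<otimes> r = \<zero>" using assS unfolding ass_def by auto
        thus "r \<in> ass R V" unfolding ass_def using SV by blast
      qed
    qed
  qed
  have VG: "S_max R a = V" unfolding S_max_def
  proof (rule Greatest_equality)
    show "V \<in> Den_l R a" by (rule VD1)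
    fix S'' assume SD'': "S'' \<in> Den_l R a"
    have "\<pi> ` S'' \<subseteq> S0 A" using S0G img[OF SD''] by blast
    moreover have "S'' \<subseteq> carrier R" using den_facts(3)[OF SD''] unfolding mult_closed_def by auto
    ultimately show "S'' \<le> V" unfolding V_def by blast
  qed
  have c1: "{r \<in> carrier R. a +> r \<in> S0 (R Quot a)} = S_max R a"
    unfolding VG V_def \<pi>_def A_def by simp
  have c2: "\<pi> ` V = S0 A"
  proof
    show "\<pi> ` V \<subseteq> S0 A" unfolding V_def by blast
    show "S0 A \<subseteq> \<pi> ` V"
    proof
      fix x assume x: "x \<in> S0 A"
      obtain r where r: "r \<in> carrier R" "x = \<pi> r" using carA S0c[OF x] by blast
      thus "x \<in> \<pi> ` V" using VI x by blast
    qed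
  qed
  have c3: "\<forall>(Qa :: ('e,'x) ring_scheme) (\<sigma>a :: 'a \<Rightarrow> 'e) (Ql :: ('f,'y) ring_scheme) (\<sigma>l :: 'a set \<Rightarrow> 'f).
        is_left_loc R V Qa \<sigma>a \<and> is_left_loc A (S0 A) Ql \<sigma>l
        \<longrightarrow> Qa \<simeq> Ql"
  proof (intro allI impI, elim conjE)
    fix Qa :: "('e,'x) ring_scheme" and \<sigma>a :: "'a \<Rightarrow> 'e" and Ql :: "('f,'y) ring_scheme" and \<sigma>l :: "'a set \<Rightarrow> 'f"
    assume La: "is_left_loc R V Qa \<sigma>a" and Ll: "is_left_loc A (S0 A) Ql \<sigma>l"
    have Qar: "ring Qa" and kera: "{r \<in> carrier R. \<sigma>a r = \<zero>\<^bsub>Qa\<^esub>} = ass R V"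
      using La unfolding is_left_loc_def by auto
    have Qlr: "ring Ql" and hl: "\<sigma>l \<in> ring_hom A Ql" and ul: "\<And>t. t \<in> S0 A \<Longrightarrow> \<sigma>l t \<in> Units Ql"
      and repl: "\<And>q. q \<in> carrier Ql \<Longrightarrow> \<exists>s\<in>S0 A. \<exists>r\<in>carrier A. q = inv\<^bsub>Ql\<^esub> (\<sigma>l s) \<otimes>\<^bsub>Ql\<^esub> \<sigma>l r"
      and kerl: "{r \<in> carrier A. \<sigma>l r = \<zero>\<^bsub>Ql\<^esub>} = ass A (S0 A)"
      using Ll unfolding is_left_loc_def by auto
    have leV: "left_ore R V" using den_facts(1)[OF VD1] .
    have hc: "(\<sigma>l \<circ> \<pi>) \<in> ring_hom R Ql" using ring_hom_trans[OF ph hl] .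
    interpret H: frac R Qa Ql V \<sigma>a "\<sigma>l \<circ> \<pi>"
      unfolding frac_def frac_axioms_def using Rr Qar Qlr leV La hc ul VD by auto
    have k: "\<forall>r\<in>carrier R. (\<sigma>l \<circ> \<pi>) r = \<zero>\<^bsub>Ql\<^esub> \<longrightarrow> \<sigma>a r = \<zero>\<^bsub>Qa\<^esub>"
    proof (intro ballI impI)
      fix r assume r: "r \<in> carrier R" and e: "(\<sigma>l \<circ> \<pi>) r = \<zero>\<^bsub>Ql\<^esub>"
      have "\<pi> r \<in> ass A (S0 A)" using kerl e pc[OF r] by auto
      hence "\<pi> r = \<zero>\<^bsub>A\<^esub>" using S0ass by auto
      hence "r \<in> ass R V" using pz r den_facts(2)[OF VD1] by auto
      thus "\<sigma>a r = \<zero>\<^bsub>Qa\<^esub>" using kera by auto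
    qed
    have sur: "\<forall>p\<in>carrier Ql. \<exists>s\<in>V. \<exists>r\<in>carrier R. p = inv\<^bsub>Ql\<^esub> ((\<sigma>l \<circ> \<pi>) s) \<otimes>\<^bsub>Ql\<^esub> (\<sigma>l \<circ> \<pi>) r"
    proof
      fix p assume "p \<in> carrier Ql"
      then obtain x y where x: "x \<in> S0 A" and y: "y \<in> carrier A" and pe: "p = inv\<^bsub>Ql\<^esub> (\<sigma>l x) \<otimes>\<^bsub>Ql\<^esub> \<sigma>l y"
        using repl by blast
      obtain v where v: "v \<in> carrier R" "x = \<pi> v" using carA S0c[OF x] by blast
      obtain r where r: "r \<in> carrier R" "y = \<pi> r" using carA y by blast
      have "v \<in> V" using VI v x by blast
      thus "\<exists>s\<in>V. \<exists>r\<in>carrier R. p = inv\<^bsub>Ql\<^esub> ((\<sigma>l \<circ> \<pi>) s) \<otimes>\<^bsub>Ql\<^esub> (\<sigma>l \<circ> \<pi>) r"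
        using pe v r by auto
    qed
    obtain \<psi> where "\<psi> \<in> ring_iso Qa Ql" using H.summary k sur by blast
    thus "Qa \<simeq> Ql" unfolding is_ring_iso_def by blast
  qed
  show ?thesis using c1 c2 c3 unfolding VG[symmetric] \<pi>_def A_def by simp
qed


theorem lemma3p3:
  fixes R :: "'a ring" and S a :: "'a set"
    and Q :: "'b ring" and \<sigma> :: "'a \<Rightarrow> 'b"
  assumes "ring R"
    and "S \<in> Den_l R a"
    and "is_left_loc R S Q \<sigma>"
  shows
   "(\<forall>T. T \<in> Den_l Q {\<zero>\<^bsub>Q\<^esub>} \<and> \<sigma> ` S \<subseteq> T \<and> {inv\<^bsub>Q\<^esub> (\<sigma> s) | s. s \<in> S} \<subseteq> T \<longrightarrow>
      (let T' = {r \<in> carrier R. \<sigma> r \<in> T} in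
        T' \<in> Den_l R a \<and>
        S_saturated R S T' \<and>
        T = {inv\<^bsub>Q\<^esub> (\<sigma> s) \<otimes>\<^bsub>Q\<^esub> \<sigma> t' | s t'. s \<in> S \<and> t' \<in> T'} \<and>
        (\<forall>(Q1 :: 'c ring) (\<sigma>1 :: 'a \<Rightarrow> 'c). is_left_loc R T' Q1 \<sigma>1 \<longrightarrow>
           (\<exists>\<phi>. \<phi> \<in> ring_hom Q Q1 \<and> (\<forall>r\<in>carrier R. \<phi> (\<sigma> r) = \<sigma>1 r) \<and>
                 inj_on \<phi> (carrier Q)) \<and>
           (\<forall>(Q2 :: 'd ring) (\<tau> :: 'b \<Rightarrow> 'd). is_left_loc Q T Q2 \<tau> \<longrightarrow>
              (\<exists>\<psi>. \<psi> \<in> ring_iso Q1 Q2 \<and> (\<forall>r\<in>carrier R. \<psi> (\<sigma>1 r) = \<tau> (\<sigma> r)))))))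
    \<and>
    {r \<in> carrier R. a +>\<^bsub>R\<^esub> r \<in> S0 (R Quot a)} = S_max R a \<and>
    (\<lambda>r. a +>\<^bsub>R\<^esub> r) ` S_max R a = S0 (R Quot a) \<and>
    (\<forall>(Qa :: 'e ring) (\<sigma>a :: 'a \<Rightarrow> 'e) (Ql :: 'f ring) (\<sigma>l :: 'a set \<Rightarrow> 'f).
        is_left_loc R (S_max R a) Qa \<sigma>a \<and> is_left_loc (R Quot a) (S0 (R Quot a)) Ql \<sigma>l
        \<longrightarrow> Qa \<simeq> Ql)"
  proof -
  have P1: "\<forall>T. T \<in> Den_l Q {\<zero>\<^bsub>Q\<^esub>} \<and> \<sigma> ` S \<subseteq> T \<and> {inv\<^bsub>Q\<^esub> (\<sigma> s) | s. s \<in> S} \<subseteq> T \<longrightarrow>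
      (let T' = {r \<in> carrier R. \<sigma> r \<in> T} in
        T' \<in> Den_l R a \<and>
        S_saturated R S T' \<and>
        T = {inv\<^bsub>Q\<^esub> (\<sigma> s) \<otimes>\<^bsub>Q\<^esub> \<sigma> t' | s t'. s \<in> S \<and> t' \<in> T'} \<and>
        (\<forall>(Q1 :: 'c ring) (\<sigma>1 :: 'a \<Rightarrow> 'c). is_left_loc R T' Q1 \<sigma>1 \<longrightarrow>
           (\<exists>\<phi>. \<phi> \<in> ring_hom Q Q1 \<and> (\<forall>r\<in>carrier R. \<phi> (\<sigma> r) = \<sigma>1 r) \<and>
                 inj_on \<phi> (carrier Q)) \<and>
           (\<forall>(Q2 :: 'd ring) (\<tau> :: 'b \<Rightarrow> 'd). is_left_loc Q T Q2 \<tau> \<longrightarrow>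
              (\<exists>\<psi>. \<psi> \<in> ring_iso Q1 Q2 \<and> (\<forall>r\<in>carrier R. \<psi> (\<sigma>1 r) = \<tau> (\<sigma> r))))))"
  proof (intro allI impI)
    fix T assume h: "T \<in> Den_l Q {\<zero>\<^bsub>Q\<^esub>} \<and> \<sigma> ` S \<subseteq> T \<and> {inv\<^bsub>Q\<^esub> (\<sigma> s) | s. s \<in> S} \<subseteq> T"
    show "let T' = {r \<in> carrier R. \<sigma> r \<in> T} in
        T' \<in> Den_l R a \<and>
        S_saturated R S T' \<and>
        T = {inv\<^bsub>Q\<^esub> (\<sigma> s) \<otimes>\<^bsub>Q\<^esub> \<sigma> t' | s t'. s \<in> S \<and> t' \<in> T'} \<and>
        (\<forall>(Q1 :: 'c ring) (\<sigma>1 :: 'a \<Rightarrow> 'c). is_left_loc R T' Q1 \<sigma>1 \<longrightarrow>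
           (\<exists>\<phi>. \<phi> \<in> ring_hom Q Q1 \<and> (\<forall>r\<in>carrier R. \<phi> (\<sigma> r) = \<sigma>1 r) \<and>
                 inj_on \<phi> (carrier Q)) \<and>
           (\<forall>(Q2 :: 'd ring) (\<tau> :: 'b \<Rightarrow> 'd). is_left_loc Q T Q2 \<tau> \<longrightarrow>
              (\<exists>\<psi>. \<psi> \<in> ring_iso Q1 Q2 \<and> (\<forall>r\<in>carrier R. \<psi> (\<sigma>1 r) = \<tau> (\<sigma> r)))))"
      unfolding Let_def
      using part1[OF assms(1) assms(2) assms(3) conjunct1[OF h] conjunct1[OF conjunct2[OF h]]
          conjunct2[OF conjunct2[OF h]] refl] by blast
  qed
  show ?thesis using P1 part2[OF assms(1) assms(2) assms(3)] by blast
qed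

end
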